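(* Let $x^*$ be a locally optimal solution of the SDCMPCC $\min_x\{\varphi(x)\ \text{s.t.}\ \Upsilon(x)\in K\times\Omega\}$ and suppose \[ \mathrm{Sp}\big(\mathcal{N}_{K\times\Omega}(\Upsilon(x^* ))\big)\cap\mathrm{Ker}(\nabla\Upsilon(x^* ))=\{0\}. \] Then $\widehat{\mathcal{M}}(x^* )=\mathcal{M}(x^* )=\mathcal{M}^c(x^* )$ is a singleton $\{(\xi^*,\Gamma^* )\}$, and for every $d\in\mathcal{C}(x^* )$, \[ \langle d,\nabla^2_{xx}L(x^*,\xi^*,\Gamma^* )d\rangle-\sigma\big((\xi^*,\Gamma^* )\mid\mathcal{T}^2_{K\times\Omega}(\Upsilon(x^* );\Upsilon'(x^* )d)\big)\ge0. \]
   Context: Standing setting: $\mathbb{X},\mathbb{Y}$ finite-dimensional real inner product spaces; $\mathbb{S}^n$ the real symmetric $n\times n$ matrices with trace inner product; $\mathbb{S}^n_\pm$ the positive/negative semidefinite cones. $\varphi:\mathbb{X}\to\mathbb{R}$, $h:\mathbb{X}\to\mathbb{Y}$, $\theta,\zeta:\mathbb{X}\to\mathbb{S}^n$ twice differentiable; $K\subseteq\mathbb{Y}$ a closed convex cone, second-order regular. $\Omega:=\{(X,Y)\mid X\in\mathbb{S}^n_+,Y\in\mathbb{S}^n_-,\langle X,Y\rangle=0\}$, $\Theta(x)=(\theta(x),\zeta(x))$, $\Upsilon(x)=(h(x),\Theta(x))$. $\mathrm{Sp}(\cdot)$ is the linear span; $\nabla\Upsilon(x)$ is the adjoint of the derivative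 $\Upsilon'(x)$. For a closed set $C$ at $y\in C$: Bouligand tangent cone $\mathcal{T}_C(y)$; regular normal cone $\widehat{\mathcal{N}}_C(y)=[\mathcal{T}_C(y)]^\circ$; limiting normal cone $\mathcal{N}_C(y)=\{v\mid\exists y^k\to y\text{ in }C,\ v^k\to v,\ v^k\in\widehat{\mathcal{N}}_C(y^k)\}$; Clarke normal cone $\mathcal{N}^c_C(y)=\mathrm{cl\,co}\,\mathcal{N}_C(y)$; outer second-order tangent set $\mathcal{T}^2_C(y;v)=\{w\mid\exists t_k\downarrow0,\ \mathrm{dist}(y+t_kv+\tfrac12t_k^2w,C)=o(t_k^2)\}$. $\sigma(\cdot\mid T)$ is the support function. Critical cone $\mathcal{C}(x)=\{d\mid\varphi'(x)d\le0,\ \Upsilon'(x)d\in\mathcal{T}_{K\times\Omega}(\Upsilon(x))\}$; Lagrangian $L(x,\xi,\Gamma)=\varphi(x)+\langle\xi,h(x)\rangle+\langle\Gamma,\Theta(x)\rangle$; multiplier sets $\widehat{\mathcal{M}}(x),\mathcal{M}(x),\mathcal{M}^c(x)$ are the sets of $(\xi,\Gamma)\in\mathbb{Y}\times(\mathbb{S}^n\times\mathbb{S}^n)$ with $\nabla_xL(x,\xi,\Gamma)=0$ and $(\xi,\Gamma)$ in $\widehat{\mathcal{N}}_{K\times\Omega}(\Upsilon(x))$, $\mathcal{N}_{K\times\Omega}(\Upsilon(x))$, $\mathcal{N}^c_{K\times\Omega}(\Upsilon(x))$ respectively. *)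

theory Defs
  imports "HOL-Analysis.Analysis"
begin

(* ---------- matrix conventions: S^n inside real^'n^'n; the inner product on
   real^'n^'n is sum_ij A_ij B_ij = trace(A^T B), i.e. the trace inner product on S^n ---------- *)

definition sym_mats :: "(real^'n^'n) set" where
  "sym_mats = {A. transpose A = A}"

definition psd_cone :: "(real^'n^'n) set" where
  "psd_cone = {A \<in> sym_mats. \<forall>v. 0 \<le> v \<bullet> (A *v v)}"

definition nsd_cone :: "(real^'n^'n) set" where
  "nsd_cone = {A \<in> sym_mats. \<forall>v. v \<bullet> (A *v v) \<le> 0}"

definition Omega_set :: "((real^'n^'n) \<times> (real^'n^'n)) set" where
  "Omega_set = {(X, Y). X \<in> psd_cone \<and> Y \<in> nsd_cone \<and> X \<bullet> Y = 0}"

definition tangent_cone :: "'a::real_normed_vector set \<Rightarrow> 'a \<Rightarrow> 'a set" where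
  "tangent_cone C y = {v. \<exists>t::nat \<Rightarrow> real. \<exists>z::nat \<Rightarrow> 'a.
      (\<forall>k. 0 < t k) \<and> t \<longlonglongrightarrow> 0 \<and> (\<forall>k. z k \<in> C) \<and>
      (\<lambda>k. (1 / t k) *\<^sub>R (z k - y)) \<longlonglongrightarrow> v}"

(* regular normal cone = polar of the tangent cone, computed in the ambient space E
   (a linear subspace containing C) *)
definition reg_normal_cone :: "'a::real_inner set \<Rightarrow> 'a set \<Rightarrow> 'a \<Rightarrow> 'a set" where
  "reg_normal_cone E C y = {v \<in> E. \<forall>w \<in> tangent_cone C y. v \<bullet> w \<le> 0}"

definition lim_normal_cone :: "'a::real_inner set \<Rightarrow> 'a set \<Rightarrow> 'a \<Rightarrow> 'a set" where
  "lim_normal_cone E C y = {v. \<exists>yk::nat \<Rightarrow> 'a. \<exists>vk::nat \<Rightarrow> 'a.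
      (\<forall>k. yk k \<in> C) \<and> yk \<longlonglongrightarrow> y \<and> vk \<longlonglongrightarrow> v \<and>
      (\<forall>k. vk k \<in> reg_normal_cone E C (yk k))}"

definition clarke_normal_cone :: "'a::real_inner set \<Rightarrow> 'a set \<Rightarrow> 'a \<Rightarrow> 'a set" where
  "clarke_normal_cone E C y = closure (convex hull (lim_normal_cone E C y))"

definition outer_so_tangent :: "'a::real_normed_vector set \<Rightarrow> 'a \<Rightarrow> 'a \<Rightarrow> 'a set" where
  "outer_so_tangent C y v = {w. \<exists>t::nat \<Rightarrow> real. (\<forall>k. 0 < t k) \<and> t \<longlonglongrightarrow> 0 \<and>
      (\<lambda>k. infdist (y + t k *\<^sub>R v + ((t k)\<^sup>2 / 2) *\<^sub>R w) C / (t k)\<^sup>2) \<longlonglongrightarrow> 0}"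

definition inner_so_tangent :: "'a::real_normed_vector set \<Rightarrow> 'a \<Rightarrow> 'a \<Rightarrow> 'a set" where
  "inner_so_tangent C y v = {w.
      ((\<lambda>t. infdist (y + t *\<^sub>R v + (t\<^sup>2 / 2) *\<^sub>R w) C / t\<^sup>2) \<longlongrightarrow> 0) (at_right 0)}"

(* second-order regularity (Bonnans-Shapiro, Def. 3.85) at a point, and of a set.
   "dist(r_k, T) \<rightarrow> 0" is written out so that dist to an empty set is +infinity. *)
definition so_regular_at :: "'a::real_normed_vector set \<Rightarrow> 'a \<Rightarrow> bool" where
  "so_regular_at C y \<longleftrightarrow> (\<forall>h \<in> tangent_cone C y.
      outer_so_tangent C y h = inner_so_tangent C y h \<and>
      (\<forall>t::nat \<Rightarrow> real. \<forall>r::nat \<Rightarrow> 'a.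
         (\<forall>k. 0 < t k) \<and> t \<longlonglongrightarrow> 0 \<and> (\<lambda>k. t k *\<^sub>R r k) \<longlonglongrightarrow> 0 \<and>
         (\<forall>k. y + t k *\<^sub>R h + ((t k)\<^sup>2 / 2) *\<^sub>R r k \<in> C) \<longrightarrow>
         (\<forall>\<epsilon>>0. \<forall>\<^sub>F k in sequentially. \<exists>w \<in> outer_so_tangent C y h. dist (r k) w < \<epsilon>)))"

definition so_regular :: "'a::real_normed_vector set \<Rightarrow> bool" where
  "so_regular C \<longleftrightarrow> (\<forall>y \<in> C. so_regular_at C y)"

(* support function, extended-real valued (sup of the empty set = -infinity) *)
definition support_fun :: "'a::real_inner \<Rightarrow> 'a set \<Rightarrow> ereal" where
  "support_fun u T = (SUP w\<in>T. ereal (u \<bullet> w))"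

definition twice_differentiable :: "('a::euclidean_space \<Rightarrow> 'b::real_normed_vector) \<Rightarrow> bool" where
  "twice_differentiable f \<longleftrightarrow> (\<forall>x. f differentiable (at x)) \<and>
     (\<forall>x. (\<lambda>z. Blinfun (frechet_derivative f (at z))) differentiable (at x))"

definition hess_quad :: "('a::euclidean_space \<Rightarrow> real) \<Rightarrow> 'a \<Rightarrow> 'a \<Rightarrow> real" where
  "hess_quad f x d =
     blinfun_apply (frechet_derivative (\<lambda>z. Blinfun (frechet_derivative f (at z))) (at x) d) d"

definition Ups :: "('x \<Rightarrow> 'y) \<Rightarrow> ('x \<Rightarrow> real^'n^'n) \<Rightarrow> ('x \<Rightarrow> real^'n^'n)
     \<Rightarrow> 'x \<Rightarrow> 'y \<times> ((real^'n^'n) \<times> (real^'n^'n))" where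
  "Ups h \<theta> \<zeta> x = (h x, (\<theta> x, \<zeta> x))"

definition mult_space :: "('y \<times> ((real^'n^'n) \<times> (real^'n^'n))) set" where
  "mult_space = UNIV \<times> (sym_mats \<times> sym_mats)"

definition Lag :: "('x \<Rightarrow> real) \<Rightarrow> ('x \<Rightarrow> 'y::real_inner) \<Rightarrow> ('x \<Rightarrow> real^'n^'n) \<Rightarrow> ('x \<Rightarrow> real^'n^'n)
     \<Rightarrow> 'x \<Rightarrow> 'y \<times> ((real^'n^'n) \<times> (real^'n^'n)) \<Rightarrow> real" where
  "Lag \<phi> h \<theta> \<zeta> x \<mu> = \<phi> x + fst \<mu> \<bullet> h x + snd \<mu> \<bullet> (\<theta> x, \<zeta> x)"

end

theory Submission
  imports Defs
begin


lemma norm_sq_add: "(norm (a + c *\<^sub>R b))^2 = (norm a)^2 + 2*c*(a \<bullet> b) + c^2*(norm b)^2"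
  for a b :: "'a::real_inner"
  by (simp only: power2_norm_eq_inner) (simp add: inner_add_left inner_add_right inner_commute power2_eq_square algebra_simps)

lemma seq_conv_dist:
  fixes p :: "nat \<Rightarrow> 'a::metric_space"
  assumes "\<And>k. dist (p k) y < 1 / Suc k"
  shows "p \<longlonglongrightarrow> y"
  unfolding lim_sequentially
proof (intro allI impI)
  fix r :: real assume r: "r > 0"
  obtain N where N: "inverse (real (Suc N)) < r" using reals_Archimedean[OF r] by blast
  show "\<exists>N. \<forall>n\<ge>N. dist (p n) y < r"
  proof (intro exI allI impI)
    fix n assume "N \<le> n"
    then have "1 / real (Suc n) \<le> 1 / real (Suc N)" by (simp add: frac_le)
    then show "dist (p n) y < r" using assms[of n] N by (simp add: inverse_eq_divide)
  qed
qed

lemma proximal_tangent: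
  fixes C :: "'a::euclidean_space set"
  assumes p: "p \<in> C" and near: "\<And>c. c \<in> C \<Longrightarrow> dist z p \<le> dist z c"
    and w: "w \<in> tangent_cone C p"
  shows "(z - p) \<bullet> w \<le> 0"
proof -
  from w obtain t zz where t: "\<forall>k. 0 < t k" "t \<longlonglongrightarrow> 0" and zz: "\<forall>k. zz k \<in> C"
    and lim: "(\<lambda>k. (1 / t k) *\<^sub>R (zz k - p)) \<longlonglongrightarrow> w"
    unfolding tangent_cone_def by blast
  define q where "q k = (1 / t k) *\<^sub>R (zz k - p)" for k
  have zq: "zz k = p + t k *\<^sub>R q k" for k
    using t(1)[rule_format, of k] by (simp add: q_def)
  have ineq: "2 * ((z - p) \<bullet> q k) \<le> t k * (norm (q k))^2" for k
  proof -
    have tk: "t k > 0" using t(1) by auto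
    have "(dist z p)^2 \<le> (dist z (zz k))^2"
      using near[of "zz k"] zz by (simp add: power_mono)
    also have "(dist z (zz k))^2 = (norm ((z - p) + (- t k) *\<^sub>R q k))^2"
      unfolding dist_norm zq by (simp add: algebra_simps)
    also have "\<dots> = (norm (z - p))^2 - 2 * t k * ((z - p) \<bullet> q k) + (t k)^2 * (norm (q k))^2"
      using norm_sq_add[of "z - p" "- t k" "q k"] by simp
    finally have "2 * t k * ((z - p) \<bullet> q k) \<le> t k * (t k * (norm (q k))^2)"
      by (simp add: dist_norm power2_eq_square algebra_simps)
    then show ?thesis using tk
      by (metis mult.assoc mult_le_cancel_left_pos mult.left_commute)
  qed
  have l1: "(\<lambda>k. 2 * ((z - p) \<bullet> q k)) \<longlonglongrightarrow> 2 * ((z - p) \<bullet> w)"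
    using lim unfolding q_def[symmetric] by (intro tendsto_intros)
  have l2: "(\<lambda>k. t k * (norm (q k))^2) \<longlonglongrightarrow> 0 * (norm w)^2"
    using lim t(2) unfolding q_def[symmetric] by (intro tendsto_intros)
  have "2 * ((z - p) \<bullet> w) \<le> 0 * (norm w)^2"
    using LIMSEQ_le[OF l1 l2] ineq by blast
  then show ?thesis by simp
qed

lemma reg_normal_scale:
  assumes "u \<in> reg_normal_cone E C p" "subspace E" "0 \<le> c"
  shows "c *\<^sub>R u \<in> reg_normal_cone E C p"
  using assms unfolding reg_normal_cone_def
  by (auto intro: subspace_scale mult_nonneg_nonpos)

lemma proximal_normal:
  fixes C :: "'a::euclidean_space set"
  assumes p: "p \<in> C" and near: "\<And>c. c \<in> C \<Longrightarrow> dist z p \<le> dist z c" and "z - p \<in> E"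
  shows "z - p \<in> reg_normal_cone E C p"
  using proximal_tangent[OF p near] assms(3) unfolding reg_normal_cone_def by auto

lemma normal_perp_small:
  fixes C :: "'a::euclidean_space set"
  assumes E: "subspace E" and perp: "\<And>u. u \<in> lim_normal_cone E C y \<Longrightarrow> l \<bullet> u = 0"
    and e: "e > 0"
  shows "\<exists>\<delta>>0. \<forall>p\<in>C. dist p y < \<delta> \<longrightarrow> (\<forall>u\<in>reg_normal_cone E C p. u \<bullet> l \<le> e * norm u)"
proof (rule ccontr)
  assume neg: "\<not> ?thesis"
  have "\<exists>p u. p \<in> C \<and> dist p y < 1 / Suc k \<and> u \<in> reg_normal_cone E C p \<and> u \<bullet> l > e * norm u" for k
  proof -
    have pos: "1 / real (Suc k) > 0" by simp
    from neg have neg': "\<forall>\<delta>>0. \<exists>p\<in>C. dist p y < \<delta> \<and> (\<exists>u\<in>reg_normal_cone E C p. e * norm u < u \<bullet> l)"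
      by (auto simp: not_le)
    have "\<exists>p\<in>C. dist p y < 1 / real (Suc k) \<and> (\<exists>u\<in>reg_normal_cone E C p. e * norm u < u \<bullet> l)"
      by (rule neg'[rule_format, OF pos])
    then show ?thesis by blast
  qed
  then obtain p u where pu: "\<And>k. p k \<in> C \<and> dist (p k) y < 1 / Suc k \<and> u k \<in> reg_normal_cone E C (p k) \<and> u k \<bullet> l > e * norm (u k)"
    by metis
  have u0: "u k \<noteq> 0" for k using pu[of k] by auto
  define v where "v k = (1 / norm (u k)) *\<^sub>R u k" for k
  have vs: "v k \<in> sphere 0 1" for k using u0 by (simp add: v_def)
  have vN: "v k \<in> reg_normal_cone E C (p k)" for k
    unfolding v_def using pu reg_normal_scale[OF _ E] by simp
  have vl: "v k \<bullet> l > e" for k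
  proof -
    have "v k \<bullet> l = (u k \<bullet> l) / norm (u k)" by (simp add: v_def)
    moreover have "(u k \<bullet> l) / norm (u k) > e" using pu[of k] u0[of k]
      by (simp add: pos_less_divide_eq mult.commute)
    ultimately show ?thesis by simp
  qed
  obtain n r where n: "n \<in> sphere 0 1" and r: "strict_mono r" and lim: "(v \<circ> r) \<longlonglongrightarrow> n"
    using compact_imp_seq_compact[OF compact_sphere, of 0 1] vs unfolding seq_compact_def by metis
  have py: "p \<longlonglongrightarrow> y" using pu seq_conv_dist by blast
  have "n \<in> lim_normal_cone E C y"
    unfolding lim_normal_cone_def
    using pu vN lim LIMSEQ_subseq_LIMSEQ[OF py r]
    by (intro CollectI exI[of _ "p \<circ> r"] exI[of _ "v \<circ> r"]) auto
  then have "l \<bullet> n = 0" by (rule perp)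
  moreover have "(\<lambda>k. (v \<circ> r) k \<bullet> l) \<longlonglongrightarrow> n \<bullet> l" using lim by (intro tendsto_intros)
  then have "e \<le> n \<bullet> l" using vl by (intro LIMSEQ_le_const) (auto intro: less_imp_le)
  ultimately show False using e by (simp add: inner_commute)
qed




lemma clarke_dir:
  fixes C :: "'a::euclidean_space set"
  assumes C: "closed C" "C \<subseteq> E" and E: "subspace E" and y: "y \<in> C" and l: "l \<in> E"
    and perp: "\<And>u. u \<in> lim_normal_cone E C y \<Longrightarrow> l \<bullet> u = 0" and e: "e > 0"
  shows "\<exists>\<delta>>0. \<forall>c\<in>C. dist c y < \<delta> \<longrightarrow> (\<forall>s. 0 \<le> s \<and> s < \<delta> \<longrightarrow> infdist (c + s *\<^sub>R l) C \<le> e * s)"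
proof -
  obtain d1 where d1: "d1 > 0" "\<forall>p\<in>C. dist p y < d1 \<longrightarrow> (\<forall>u\<in>reg_normal_cone E C p. u \<bullet> l \<le> e * norm u)"
    using normal_perp_small[OF E perp e] by blast
  define \<delta> where "\<delta> = d1 / (1 + 2 * norm l)"
  have lpos: "1 + 2 * norm l > 0" by (simp add: add_pos_nonneg)
  have dpos: "\<delta> > 0" using d1 lpos by (simp add: \<delta>_def)
  have dd0: "\<delta> * (1 + 2 * norm l) = d1" unfolding \<delta>_def using lpos by simp
  have dd: "\<delta> + 2 * (\<delta> * norm l) = d1" using dd0 by (simp add: algebra_simps)
  show ?thesis
  proof (intro exI[of _ \<delta>] conjI dpos ballI impI allI)
    fix c s assume c: "c \<in> C" "dist c y < \<delta>" and s: "0 \<le> s \<and> s < \<delta>"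
    define f where "f \<sigma> = infdist (c + \<sigma> *\<^sub>R l) C" for \<sigma>
    have step: "(f (\<sigma> + h))^2 \<le> (f \<sigma>)^2 + 2 * h * e * f \<sigma> + h^2 * (norm l)^2"
      if sg: "0 \<le> \<sigma>" "\<sigma> \<le> s" and h: "0 \<le> h" for \<sigma> h
    proof -
      define z where "z = c + \<sigma> *\<^sub>R l"
      obtain p where p: "p \<in> C" "infdist z C = dist z p"
        using infdist_attains_inf[OF C(1)] y by blast
      have near: "\<And>c'. c' \<in> C \<Longrightarrow> dist z p \<le> dist z c'" using p infdist_le by metis
      have zE: "z \<in> E" using c C(2) l E by (auto simp: z_def intro: subspace_add subspace_scale)
      have pE: "p \<in> E" using p C(2) by auto
      have vN: "z - p \<in> reg_normal_cone E C p"
        by (rule proximal_normal[OF p(1) near subspace_diff[OF E zE pE]])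
      have "dist p y < d1"
      proof -
        have "dist z p \<le> dist z c" using near c by auto
        also have "dist z c = \<sigma> * norm l" using sg by (simp add: z_def dist_norm)
        finally have 1: "dist p z \<le> \<sigma> * norm l" by (simp add: dist_commute)
        have 2: "dist z c \<le> \<sigma> * norm l" using sg by (simp add: z_def dist_norm)
        have 3: "\<sigma> * norm l \<le> \<delta> * norm l" using sg s by (intro mult_right_mono) auto
        have "dist p y \<le> dist p z + dist z y" by (rule dist_triangle)
        moreover have "dist z y \<le> dist z c + dist c y" by (rule dist_triangle)
        ultimately show ?thesis using 1 2 3 c(2) dd by linarith
      qed
      then have vl: "(z - p) \<bullet> l \<le> e * norm (z - p)" using d1(2) p(1) vN by blast
      have fz: "f \<sigma> = norm (z - p)" by (simp add: f_def z_def[symmetric] p dist_norm)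
      have "f (\<sigma> + h) \<le> dist (z + h *\<^sub>R l) p"
        unfolding f_def z_def by (simp add: scaleR_add_left algebra_simps infdist_le[OF p(1)])
      also have "\<dots> = norm ((z - p) + h *\<^sub>R l)" by (simp add: dist_norm algebra_simps)
      finally have "(f (\<sigma> + h))^2 \<le> (norm ((z - p) + h *\<^sub>R l))^2"
        by (simp add: f_def power_mono infdist_nonneg)
      also have "\<dots> = (norm (z - p))^2 + 2*h*((z - p) \<bullet> l) + h^2*(norm l)^2"
        by (rule norm_sq_add)
      also have "\<dots> \<le> (norm (z - p))^2 + 2*h*(e * norm (z - p)) + h^2*(norm l)^2"
        using vl h by (simp add: mult_left_mono)
      finally show ?thesis using fz by (simp add: algebra_simps)
    qed
    have f0: "f 0 = 0" using c by (simp add: f_def)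
    have fnn: "f \<sigma> \<ge> 0" for \<sigma> by (simp add: f_def infdist_nonneg)
    have bound: "f s \<le> s * e + s * norm l * sqrt (inverse (real N))" if N: "N \<ge> 1" for N :: nat
    proof -
      define hh where "hh = s / real N"
      have hh0: "hh \<ge> 0" using s by (simp add: hh_def)
      have Nhh: "real N * hh = s" using N by (simp add: hh_def)
      have ind: "j \<le> N \<longrightarrow> f (real j * hh) \<le> real j * hh * e + sqrt (real j) * hh * norm l" for j
      proof (induction j)
        case 0
        show ?case using f0 by simp
      next
        case (Suc j)
        show ?case
        proof
          assume jN: "Suc j \<le> N"
          define \<sigma> where "\<sigma> = real j * hh"
          have sg: "0 \<le> \<sigma>" "\<sigma> \<le> s" using hh0 jN Nhh
            by (auto simp: \<sigma>_def intro!: mult_right_mono[of "real j" "real N" hh, THEN order_trans])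
          define a where "a = f \<sigma>"
          define B where "B = real j * hh * e + sqrt (real j) * hh * norm l"
          define P where "P = real (Suc j) * hh * e"
          define m where "m = hh * norm l"
          define q where "q = sqrt (real j)"
          define q' where "q' = sqrt (real (Suc j))"
          have aB: "a \<le> B" using Suc.IH jN by (simp add: a_def B_def \<sigma>_def)
          have a0: "0 \<le> a" by (simp add: a_def fnn)
          have P0: "P \<ge> 0" "m \<ge> 0" using hh0 e by (auto simp: P_def m_def)
          have qq: "q \<le> q'" by (simp add: q_def q'_def)
          have q2: "q^2 + 1 = q'^2" by (simp add: q_def q'_def)
          have BP: "B + hh * e = P + q * m" by (simp add: B_def P_def q_def m_def algebra_simps)
          have "(f (real (Suc j) * hh))^2 = (f (\<sigma> + hh))^2" by (simp add: \<sigma>_def algebra_simps)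
          also have "\<dots> \<le> a^2 + 2 * hh * e * a + hh^2 * (norm l)^2"
            using step[OF sg hh0] by (simp add: a_def)
          also have "\<dots> = (a + hh * e)^2 + m^2 - (hh * e)^2"
            by (simp add: m_def power2_eq_square algebra_simps)
          also have "\<dots> \<le> (a + hh * e)^2 + m^2" by simp
          also have "\<dots> \<le> (B + hh * e)^2 + m^2"
            using aB a0 hh0 e by (intro add_right_mono power_mono) auto
          also have "\<dots> = P^2 + 2*(P*m)*q + (q^2 + 1)*m^2"
            unfolding BP by (simp add: power2_eq_square algebra_simps)
          also have "\<dots> \<le> P^2 + 2*(P*m)*q' + q'^2*m^2"
            using q2 qq P0 by (simp add: mult_left_mono mult_nonneg_nonneg)
          also have "\<dots> = (P + q' * m)^2" by (simp add: power2_eq_square algebra_simps)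
          finally have "(f (real (Suc j) * hh))^2 \<le> (P + q' * m)^2" .
          moreover have "P + q' * m \<ge> 0" using P0 by (simp add: q'_def)
          ultimately have "f (real (Suc j) * hh) \<le> P + q' * m"
            using power2_le_imp_le by blast
          then show "f (real (Suc j) * hh) \<le> real (Suc j) * hh * e + sqrt (real (Suc j)) * hh * norm l"
            by (simp add: P_def q'_def m_def algebra_simps)
        qed
      qed
      have "f s \<le> real N * hh * e + sqrt (real N) * hh * norm l"
        using ind[of N] Nhh by simp
      also have "sqrt (real N) * hh = s * sqrt (inverse (real N))"
      proof -
        have N0: "real N > 0" using N by simp
        have sN: "sqrt (real N) * sqrt (real N) = real N" by simp
        have sN0: "sqrt (real N) > 0" using N0 by simp
        have "sqrt (real N) * hh = s * (sqrt (real N) / real N)" by (simp add: hh_def)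
        also have "sqrt (real N) / real N = inverse (sqrt (real N))"
          using sN0 N0 sN by (simp add: field_simps)
        also have "\<dots> = sqrt (inverse (real N))" by (simp add: real_sqrt_inverse)
        finally show ?thesis .
      qed
      finally show ?thesis using Nhh by (simp add: algebra_simps)
    qed
    have lim: "(\<lambda>N. s * e + s * norm l * sqrt (inverse (real (Suc N)))) \<longlonglongrightarrow> s * e + s * norm l * 0"
      using tendsto_real_sqrt[OF LIMSEQ_inverse_real_of_nat]
      by (intro tendsto_intros) simp_all
    have "f s \<le> s * e + s * norm l * sqrt (inverse (real (Suc N)))" for N
      using bound[of "Suc N"] by simp
    then have "f s \<le> s * e + s * norm l * 0"
      by (intro LIMSEQ_le_const[OF lim]) blast
    then show "infdist (c + s *\<^sub>R l) C \<le> e * s" by (simp add: f_def mult.commute)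
  qed
qed




lemma tendsto_zero_eps:
  fixes X :: "nat \<Rightarrow> 'a::real_normed_vector"
  assumes "\<And>r. r > 0 \<Longrightarrow> \<exists>N. \<forall>k\<ge>N. norm (X k) \<le> r"
  shows "X \<longlonglongrightarrow> 0"
  unfolding LIMSEQ_iff
proof (intro allI impI)
  fix r :: real assume "r > 0"
  then obtain N where "\<forall>k\<ge>N. norm (X k) \<le> r/2" using assms[of "r/2"] by auto
  then show "\<exists>no. \<forall>n\<ge>no. norm (X n - 0) < r" using \<open>r > 0\<close> by force
qed

lemma eventually_lt_seq:
  fixes X :: "nat \<Rightarrow> 'a::metric_space"
  assumes "X \<longlonglongrightarrow> a" "d > 0"
  shows "\<exists>N. \<forall>k\<ge>N. dist (X k) a < d"
  using assms unfolding lim_sequentially by blast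

lemma tangent_shift:
  fixes C :: "'a::euclidean_space set"
  assumes C: "closed C" "C \<subseteq> E" and E: "subspace E" and y: "y \<in> C" and l: "l \<in> E"
    and perp: "\<And>u. u \<in> lim_normal_cone E C y \<Longrightarrow> l \<bullet> u = 0"
    and v: "v \<in> tangent_cone C y"
  shows "v + l \<in> tangent_cone C y"
proof -
  obtain t z where t: "\<forall>k. 0 < t k" "t \<longlonglongrightarrow> 0" and z: "\<forall>k. z k \<in> C"
    and lim: "(\<lambda>k. (1 / t k) *\<^sub>R (z k - y)) \<longlonglongrightarrow> v"
    using v unfolding tangent_cone_def by blast
  have zy0: "(\<lambda>k. t k *\<^sub>R ((1 / t k) *\<^sub>R (z k - y))) \<longlonglongrightarrow> 0 *\<^sub>R v"
    using t(2) lim by (intro tendsto_intros)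
  have "(\<lambda>k. t k *\<^sub>R ((1 / t k) *\<^sub>R (z k - y))) = (\<lambda>k. z k - y)"
  proof
    fix k
    from t(1) have "t k \<noteq> 0" by (metis less_irrefl)
    then show "t k *\<^sub>R ((1 / t k) *\<^sub>R (z k - y)) = z k - y" by simp
  qed
  then have "(\<lambda>k. z k - y) \<longlonglongrightarrow> 0" using zy0 by simp
  then have zy: "z \<longlonglongrightarrow> y" by (simp add: LIM_zero_iff)
  have "\<forall>k. \<exists>c. c \<in> C \<and> infdist (z k + t k *\<^sub>R l) C = dist (z k + t k *\<^sub>R l) c"
    using infdist_attains_inf[OF C(1)] y by blast
  then obtain c where c: "\<And>k. c k \<in> C" "\<And>k. infdist (z k + t k *\<^sub>R l) C = dist (z k + t k *\<^sub>R l) (c k)"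
    by metis
  have small: "(\<lambda>k. (1 / t k) *\<^sub>R (c k - (z k + t k *\<^sub>R l))) \<longlonglongrightarrow> 0"
  proof (rule tendsto_zero_eps)
    fix r :: real assume r: "r > 0"
    obtain \<delta> where d: "\<delta> > 0" "\<forall>c\<in>C. dist c y < \<delta> \<longrightarrow> (\<forall>s. 0 \<le> s \<and> s < \<delta> \<longrightarrow> infdist (c + s *\<^sub>R l) C \<le> r * s)"
      using clarke_dir[OF C E y l perp r] by blast
    obtain N1 where N1: "\<forall>k\<ge>N1. dist (z k) y < \<delta>" using eventually_lt_seq[OF zy d(1)] by blast
    obtain N2 where N2: "\<forall>k\<ge>N2. dist (t k) 0 < \<delta>" using eventually_lt_seq[OF t(2) d(1)] by blast
    show "\<exists>N. \<forall>k\<ge>N. norm ((1 / t k) *\<^sub>R (c k - (z k + t k *\<^sub>R l))) \<le> r"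
    proof (intro exI allI impI)
      fix k assume k: "max N1 N2 \<le> k"
      have tk: "t k > 0" using t(1) by auto
      have "infdist (z k + t k *\<^sub>R l) C \<le> r * t k"
        using d(2) z N1 N2 k tk by auto
      then have "norm (c k - (z k + t k *\<^sub>R l)) \<le> r * t k"
        using c(2)[of k] by (simp add: dist_norm norm_minus_commute)
      then show "norm ((1 / t k) *\<^sub>R (c k - (z k + t k *\<^sub>R l))) \<le> r"
        using tk by (simp add: divide_le_eq mult.commute)
    qed
  qed
  have eq: "(\<lambda>k. (1 / t k) *\<^sub>R (c k - y)) = (\<lambda>k. (1 / t k) *\<^sub>R (z k - y) + l + (1 / t k) *\<^sub>R (c k - (z k + t k *\<^sub>R l)))"
  proof
    fix k
    have tk: "t k \<noteq> 0" using t(1) by (metis less_irrefl)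
    have "(1 / t k) *\<^sub>R (c k - y) = (1 / t k) *\<^sub>R (z k - y) + (1 / t k) *\<^sub>R (t k *\<^sub>R l) + (1 / t k) *\<^sub>R (c k - (z k + t k *\<^sub>R l))"
      by (simp add: algebra_simps)
    then show "(1 / t k) *\<^sub>R (c k - y) = (1 / t k) *\<^sub>R (z k - y) + l + (1 / t k) *\<^sub>R (c k - (z k + t k *\<^sub>R l))"
      using tk by simp
  qed
  have "(\<lambda>k. (1 / t k) *\<^sub>R (c k - y)) \<longlonglongrightarrow> v + l + 0"
    unfolding eq by (intro tendsto_intros lim small)
  then show ?thesis unfolding tangent_cone_def using t c(1) by auto
qed

lemma so_shift:
  fixes C :: "'a::euclidean_space set"
  assumes C: "closed C" "C \<subseteq> E" and E: "subspace E" and y: "y \<in> C" and l: "l \<in> E"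
    and perp: "\<And>u. u \<in> lim_normal_cone E C y \<Longrightarrow> l \<bullet> u = 0"
    and w: "w \<in> outer_so_tangent C y v"
  shows "w + l \<in> outer_so_tangent C y v"
proof -
  obtain t where t: "\<forall>k. 0 < t k" "t \<longlonglongrightarrow> 0"
    and lim: "(\<lambda>k. infdist (y + t k *\<^sub>R v + ((t k)\<^sup>2 / 2) *\<^sub>R w) C / (t k)\<^sup>2) \<longlonglongrightarrow> 0"
    using w unfolding outer_so_tangent_def by blast
  define a where "a k = y + t k *\<^sub>R v + ((t k)\<^sup>2 / 2) *\<^sub>R w" for k
  have ay: "a \<longlonglongrightarrow> y + 0 *\<^sub>R v + ((0::real)\<^sup>2 / 2) *\<^sub>R w"
    unfolding a_def using t(2) by (intro tendsto_intros) simp_all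
  then have ay: "a \<longlonglongrightarrow> y" by simp
  have "\<forall>k. \<exists>c. c \<in> C \<and> infdist (a k) C = dist (a k) c"
    using infdist_attains_inf[OF C(1)] y by blast
  then obtain c where c: "\<And>k. c k \<in> C" "\<And>k. infdist (a k) C = dist (a k) (c k)"
    by metis
  have cy: "c \<longlonglongrightarrow> y"
  proof -
    have b: "dist (c k) y \<le> 2 * dist (a k) y" for k
    proof -
      have "dist (a k) (c k) \<le> dist (a k) y" using c(2)[of k] infdist_le[OF y, of "a k"] by simp
      moreover have "dist (c k) y \<le> dist (c k) (a k) + dist (a k) y" by (rule dist_triangle)
      ultimately show ?thesis by (simp add: dist_commute)
    qed
    have d0: "(\<lambda>k. dist (a k) y) \<longlonglongrightarrow> 0" using ay tendsto_dist_iff by blast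
    have "(\<lambda>k. 2 * dist (a k) y) \<longlonglongrightarrow> 0" using tendsto_mult_right_zero[OF d0] by simp
    moreover have e1: "eventually (\<lambda>k. 0 \<le> dist (c k) y) sequentially" by simp
    moreover have e2: "eventually (\<lambda>k. dist (c k) y \<le> 2 * dist (a k) y) sequentially" using b by simp
    ultimately have "(\<lambda>k. dist (c k) y) \<longlonglongrightarrow> 0"
      using tendsto_sandwich[OF e1 e2 tendsto_const] by blast
    then show ?thesis using tendsto_dist_iff by blast
  qed
  show ?thesis
    unfolding outer_so_tangent_def
  proof (intro CollectI exI[of _ t] conjI t)
    show "(\<lambda>k. infdist (y + t k *\<^sub>R v + ((t k)\<^sup>2 / 2) *\<^sub>R (w + l)) C / (t k)\<^sup>2) \<longlonglongrightarrow> 0"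
    proof (rule tendsto_zero_eps)
      fix r :: real assume r: "r > 0"
      have r4: "r / 4 > 0" using r by simp
      obtain \<delta> where d: "\<delta> > 0" "\<forall>c\<in>C. dist c y < \<delta> \<longrightarrow> (\<forall>s. 0 \<le> s \<and> s < \<delta> \<longrightarrow> infdist (c + s *\<^sub>R l) C \<le> r / 4 * s)"
        using clarke_dir[OF C E y l perp r4] by blast
      have t2: "(\<lambda>k. (t k)\<^sup>2 / 2) \<longlonglongrightarrow> 0\<^sup>2 / 2" using t(2) by (intro tendsto_intros) simp_all
      obtain N1 where N1: "\<forall>k\<ge>N1. dist (c k) y < \<delta>" using eventually_lt_seq[OF cy d(1)] by blast
      obtain N2 where N2: "\<forall>k\<ge>N2. dist ((t k)\<^sup>2 / 2) 0 < \<delta>" using eventually_lt_seq[OF t2 d(1)] by auto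
      obtain N3 where N3: "\<forall>k\<ge>N3. dist (infdist (a k) C / (t k)\<^sup>2) 0 < r / 4"
        using eventually_lt_seq[OF lim r4] unfolding a_def by blast
      show "\<exists>N. \<forall>k\<ge>N. norm (infdist (y + t k *\<^sub>R v + ((t k)\<^sup>2 / 2) *\<^sub>R (w + l)) C / (t k)\<^sup>2) \<le> r"
      proof (intro exI allI impI)
        fix k assume k: "max N1 (max N2 N3) \<le> k"
        have tk: "t k > 0" using t(1) by auto
        have t2p: "(t k)\<^sup>2 > 0" using tk by simp
        define s where "s = (t k)\<^sup>2 / 2"
        have s0: "0 \<le> s" "s < \<delta>" using N2 k tk by (auto simp: s_def)
        have eqa: "y + t k *\<^sub>R v + ((t k)\<^sup>2 / 2) *\<^sub>R (w + l) = a k + s *\<^sub>R l"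
          by (simp add: a_def s_def algebra_simps)
        have "infdist (a k + s *\<^sub>R l) C \<le> infdist (c k + s *\<^sub>R l) C + dist (a k + s *\<^sub>R l) (c k + s *\<^sub>R l)"
          by (rule infdist_triangle)
        also have "dist (a k + s *\<^sub>R l) (c k + s *\<^sub>R l) = infdist (a k) C"
          using c(2)[of k] by (simp add: dist_norm)
        also have "infdist (c k + s *\<^sub>R l) C \<le> r / 4 * s" using d(2) c(1) N1 k s0 by auto
        finally have 1: "infdist (a k + s *\<^sub>R l) C \<le> r / 4 * s + infdist (a k) C" by simp
        have 2: "infdist (a k) C < r / 4 * (t k)\<^sup>2"
          using N3 k t2p by (simp add: infdist_nonneg divide_less_eq)
        have "infdist (a k + s *\<^sub>R l) C \<le> r * (t k)\<^sup>2"
        proof -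
          have "r / 4 * s = (r * (t k)\<^sup>2) / 8" by (simp add: s_def)
          moreover have "r * (t k)\<^sup>2 > 0" using r t2p by simp
          ultimately show ?thesis using 1 2 by linarith
        qed
        then show "norm (infdist (y + t k *\<^sub>R v + ((t k)\<^sup>2 / 2) *\<^sub>R (w + l)) C / (t k)\<^sup>2) \<le> r"
          unfolding eqa using t2p by (simp add: infdist_nonneg divide_le_eq)
      qed
    qed
  qed
qed




lemma seq_conv_bound:
  fixes p :: "nat \<Rightarrow> 'a::metric_space"
  assumes "\<And>k. dist (p k) y \<le> b k" "b \<longlonglongrightarrow> 0"
  shows "p \<longlonglongrightarrow> y"
proof -
  have e1: "eventually (\<lambda>k. 0 \<le> dist (p k) y) sequentially" by simp
  have e2: "eventually (\<lambda>k. dist (p k) y \<le> b k) sequentially" using assms(1) by simp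
  have "(\<lambda>k. dist (p k) y) \<longlonglongrightarrow> 0"
    using tendsto_sandwich[OF e1 e2 tendsto_const assms(2)] .
  then show ?thesis using tendsto_dist_iff by blast
qed

lemma deriv_lower:
  fixes f :: "'b::real_normed_vector \<Rightarrow> real"
  assumes der: "(f has_derivative f') (at u)"
    and loc: "\<exists>\<delta>>0. \<forall>s. 0 < s \<and> s < \<delta> \<longrightarrow> f (u + s *\<^sub>R e) - f u \<ge> - (c * s)"
  shows "f' e \<ge> - c"
proof (rule ccontr)
  assume "\<not> f' e \<ge> - c"
  then have gap: "f' e + c < 0" by simp
  define \<eta> where "\<eta> = - (f' e + c) / 2"
  have eta: "\<eta> > 0" using gap by (simp add: \<eta>_def)
  obtain \<delta> where d: "\<delta> > 0" "\<forall>s. 0 < s \<and> s < \<delta> \<longrightarrow> f (u + s *\<^sub>R e) - f u \<ge> - (c * s)"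
    using loc by blast
  have bl: "bounded_linear f'" using der by (rule has_derivative_bounded_linear)
  define \<epsilon> where "\<epsilon> = \<eta> / (norm e + 1)"
  have ne: "norm e + 1 > 0" using norm_ge_zero[of e] by linarith
  have ep: "\<epsilon> > 0" using eta ne by (simp add: \<epsilon>_def)
  obtain d where dd: "d > 0" "\<forall>y. norm (y - u) < d \<longrightarrow> norm (f y - f u - f' (y - u)) \<le> \<epsilon> * norm (y - u)"
    using der ep unfolding has_derivative_at_alt by blast
  define s where "s = min \<delta> (d / (norm e + 1)) / 2"
  have s0: "s > 0" using d dd ne by (simp add: s_def)
  have s1: "s < \<delta>" using d dd ne by (simp add: s_def)
  have s2: "s * (norm e + 1) < d"
  proof -
    have "s \<le> d / (norm e + 1) / 2" unfolding s_def by (intro divide_right_mono min.cobounded2) simp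
    then have "s * (norm e + 1) \<le> d / 2" using ne by (simp add: field_simps)
    then show ?thesis using dd by simp
  qed
  have nse: "norm (s *\<^sub>R e) = s * norm e" using s0 by simp
  have "norm ((u + s *\<^sub>R e) - u) < d" using nse s2 s0 by (simp add: algebra_simps)
  then have "norm (f (u + s *\<^sub>R e) - f u - f' (s *\<^sub>R e)) \<le> \<epsilon> * (s * norm e)"
    using dd(2) nse by (metis add_diff_cancel_left')
  moreover have "f' (s *\<^sub>R e) = s * f' e" using linear_cmul[OF bounded_linear.linear[OF bl], of s e] by simp
  moreover have "\<epsilon> * (s * norm e) \<le> \<eta> * s"
  proof -
    have "\<epsilon> * norm e \<le> \<eta>" using eta ne by (simp add: \<epsilon>_def field_simps)
    then show ?thesis using s0 by (metis mult.assoc mult.commute mult_right_mono less_imp_le)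
  qed
  ultimately have "s * f' e \<ge> f (u + s *\<^sub>R e) - f u - \<eta> * s" by (simp add: abs_le_iff)
  moreover have "f (u + s *\<^sub>R e) - f u \<ge> - (c * s)" using d(2) s0 s1 by blast
  ultimately have "s * f' e \<ge> s * (- c - \<eta>)" by (simp add: algebra_simps)
  then have "f' e \<ge> - c - \<eta>" using s0 by simp
  then have "2 * f' e \<ge> 2 * (- c) + (f' e + c)" unfolding \<eta>_def by (simp add: field_simps)
  then show False using gap by simp
qed




lemma metric_subreg:
  fixes U :: "'b::euclidean_space \<Rightarrow> 'a::euclidean_space" and C :: "'a set"
  assumes C: "closed C" "C \<subseteq> E" and E: "subspace E" and UE: "\<And>z. U z \<in> E"
    and feas: "U xs \<in> C"
    and der: "\<And>z. (U has_derivative DU z) (at z)"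
    and cont: "\<And>e. isCont (\<lambda>z. DU z e) xs"
    and cq: "\<And>v. v \<in> lim_normal_cone E C (U xs) \<Longrightarrow> (\<forall>e. v \<bullet> DU xs e = 0) \<Longrightarrow> v = 0"
  shows "\<exists>\<kappa>>0. \<exists>\<delta>>0. \<forall>x. dist x xs < \<delta> \<longrightarrow> (\<exists>x'. U x' \<in> C \<and> dist x' x \<le> \<kappa> * infdist (U x) C)"
proof (rule ccontr)
  assume neg: "\<not> ?thesis"
  have Cne: "C \<noteq> {}" using feas by auto
  have Ucont: "continuous_on S U" for S
    using der by (intro has_derivative_continuous_on) (blast intro: has_derivative_at_withinI)
  have Uc: "isCont U z" for z using has_derivative_continuous[OF der[of z]] .
  have ex: "\<exists>x. dist x xs < 1 / Suc k \<and> (\<forall>x'. U x' \<in> C \<longrightarrow> real (Suc k) * infdist (U x) C < dist x' x)" for k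
  proof -
    from neg have neg': "\<forall>\<kappa>>0. \<forall>\<delta>>0. \<exists>x. dist x xs < \<delta> \<and> (\<forall>x'. U x' \<in> C \<longrightarrow> \<kappa> * infdist (U x) C < dist x' x)"
      by (auto simp: not_le)
    have p1: "real (Suc k) > 0" "1 / real (Suc k) > 0" by simp_all
    show ?thesis using neg'[rule_format, OF p1] .
  qed
  then obtain x where x: "\<And>k. dist (x k) xs < 1 / Suc k"
    "\<And>k x'. U x' \<in> C \<Longrightarrow> real (Suc k) * infdist (U (x k)) C < dist x' (x k)"
    by metis
  have claim: "\<exists>u c n. dist u (x k) < 1 / Suc k \<and> c \<in> C \<and> dist c (U u) \<le> dist (U xs) (U u)
      \<and> n \<in> reg_normal_cone E C c \<and> norm n = 1 \<and> (\<forall>e. - (n \<bullet> DU u e) \<le> 2 / real (Suc k) * norm e)" for k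
  proof -
    define \<kappa> where "\<kappa> = real (Suc k)"
    have kp: "\<kappa> > 0" by (simp add: \<kappa>_def)
    define r where "r = infdist (U (x k)) C"
    define \<rho> where "\<rho> = \<kappa> * r"
    have r0: "r > 0"
    proof (rule ccontr)
      assume "\<not> r > 0"
      then have "r = 0" using infdist_nonneg[of "U (x k)" C] by (simp add: r_def)
      then have "U (x k) \<in> C" using in_closed_iff_infdist_zero[OF C(1) Cne] by (simp add: r_def)
      have "real (Suc k) * infdist (U (x k)) C < dist (x k) (x k)" by (rule x(2)[OF \<open>U (x k) \<in> C\<close>])
      then show False using \<open>r = 0\<close> by (simp add: r_def)
    qed
    have rho0: "\<rho> > 0" using kp r0 by (simp add: \<rho>_def)
    have rho1: "\<rho> < 1 / Suc k"
    proof -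
      have "\<rho> < dist xs (x k)" using x(2)[OF feas] by (simp add: \<rho>_def \<kappa>_def r_def)
      also have "\<dots> < 1 / Suc k" using x(1)[of k] by (simp add: dist_commute)
      finally show ?thesis .
    qed
    define g where "g u = infdist (U u) C + (2 / \<kappa>) * dist u (x k)" for u
    have gc: "continuous_on (cball (x k) \<rho>) g"
      unfolding g_def
      by (intro continuous_intros continuous_on_compose2[OF continuous_on_infdist[OF continuous_on_id] Ucont]) auto
    obtain u where u: "u \<in> cball (x k) \<rho>" "\<And>z. z \<in> cball (x k) \<rho> \<Longrightarrow> g u \<le> g z"
      using continuous_attains_inf[OF compact_cball _ gc] rho0 by fastforce
    have gu: "g u \<le> r" using u(2)[of "x k"] rho0 by (simp add: g_def r_def)
    have du: "dist u (x k) \<le> \<rho> / 2"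
    proof -
      have "(2 / \<kappa>) * dist u (x k) \<le> r" using gu infdist_nonneg[of "U u" C] by (simp add: g_def)
      then show ?thesis using kp by (simp add: \<rho>_def field_simps dist_commute)
    qed
    define q where "q = infdist (U u) C"
    have q0: "q > 0"
    proof (rule ccontr)
      assume "\<not> q > 0"
      then have "q = 0" using infdist_nonneg[of "U u" C] by (simp add: q_def)
      then have "U u \<in> C" using in_closed_iff_infdist_zero[OF C(1) Cne] by (simp add: q_def)
      from x(2)[OF this] have "\<rho> < dist u (x k)" by (simp add: \<rho>_def \<kappa>_def r_def)
      then show False using du rho0 by simp
    qed
    obtain c where c: "c \<in> C" "infdist (U u) C = dist (U u) c"
      using infdist_attains_inf[OF C(1) Cne] by blast
    have near: "\<And>c'. c' \<in> C \<Longrightarrow> dist (U u) c \<le> dist (U u) c'" using c infdist_le by metis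
    have cE: "c \<in> E" using c C(2) by auto
    have vN: "U u - c \<in> reg_normal_cone E C c"
      by (rule proximal_normal[OF c(1) near subspace_diff[OF E UE cE]])
    define n where "n = (1 / q) *\<^sub>R (U u - c)"
    have nq: "norm (U u - c) = q" using c(2) by (simp add: q_def dist_norm)
    have nN: "n \<in> reg_normal_cone E C c" unfolding n_def using reg_normal_scale[OF vN E] q0 by simp
    have n1: "norm n = 1" using q0 nq by (simp add: n_def)
    have dc: "dist c (U u) \<le> dist (U xs) (U u)"
      using near[OF feas] by (simp add: dist_commute)
    have du2: "dist u (x k) < 1 / Suc k" using du rho0 rho1 by simp
    have dbound: "- (n \<bullet> DU u e) \<le> 2 / real (Suc k) * norm e" for e
    proof -
      define \<psi> where "\<psi> z = norm (U z - c)" for z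
      have nz: "U u - c \<noteq> 0" using nq q0 by auto
      have dpsi: "(\<psi> has_derivative (\<lambda>h. (DU u h - 0) \<bullet> sgn (U u - c))) (at u)"
        unfolding \<psi>_def
        by (rule has_derivative_compose[OF has_derivative_diff[OF der has_derivative_const] has_derivative_norm[OF nz]])
      have sg: "sgn (U u - c) = n" using nq q0 by (simp add: sgn_div_norm n_def divide_inverse_commute)
      have loc: "\<exists>\<delta>>0. \<forall>s. 0 < s \<and> s < \<delta> \<longrightarrow> \<psi> (u + s *\<^sub>R e) - \<psi> u \<ge> - ((2 / \<kappa> * norm e) * s)"
      proof (intro exI[of _ "(\<rho> / 2) / (norm e + 1)"] conjI allI impI)
        have ne: "norm e + 1 > 0" using norm_ge_zero[of e] by linarith
        show "(\<rho> / 2) / (norm e + 1) > 0" using rho0 ne by simp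
        fix s assume s: "0 < s \<and> s < (\<rho> / 2) / (norm e + 1)"
        have "s * norm e \<le> s * (norm e + 1)" using s by simp
        also have "s * (norm e + 1) < \<rho> / 2" using s ne by (simp add: field_simps)
        finally have sn: "s * norm e < \<rho> / 2" .
        have dz: "dist (u + s *\<^sub>R e) (x k) \<le> dist u (x k) + s * norm e"
        proof -
          have "dist (u + s *\<^sub>R e) (x k) \<le> dist (u + s *\<^sub>R e) u + dist u (x k)" by (rule dist_triangle)
          then show ?thesis using s by (simp add: dist_norm add.commute)
        qed
        have zin: "u + s *\<^sub>R e \<in> cball (x k) \<rho>" using dz du sn by (simp add: dist_commute)
        have "g u \<le> g (u + s *\<^sub>R e)" by (rule u(2)[OF zin])
        moreover have "infdist (U (u + s *\<^sub>R e)) C \<le> \<psi> (u + s *\<^sub>R e)"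
          unfolding \<psi>_def using infdist_le[OF c(1)] by (simp add: dist_norm)
        moreover have "g u = \<psi> u + (2 / \<kappa>) * dist u (x k)"
          by (simp add: g_def \<psi>_def c(2) dist_norm)
        moreover have "(2 / \<kappa>) * dist (u + s *\<^sub>R e) (x k) \<le> (2 / \<kappa>) * (dist u (x k) + s * norm e)"
          using dz kp by (intro mult_left_mono) auto
        ultimately show "\<psi> (u + s *\<^sub>R e) - \<psi> u \<ge> - ((2 / \<kappa> * norm e) * s)"
          unfolding g_def by (simp add: algebra_simps)
      qed
      have "(DU u e - 0) \<bullet> sgn (U u - c) \<ge> - (2 / \<kappa> * norm e)"
        by (rule deriv_lower[OF dpsi loc])
      then show ?thesis using sg by (simp add: \<kappa>_def inner_commute)
    qed
    show ?thesis using du2 c(1) dc nN n1 dbound by blast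
  qed
  define R where "R k u c n \<longleftrightarrow> dist u (x k) < 1 / Suc k \<and> c \<in> C \<and> dist c (U u) \<le> dist (U xs) (U u)
      \<and> n \<in> reg_normal_cone E C c \<and> norm n = 1 \<and> (\<forall>e. - (n \<bullet> DU u e) \<le> 2 / real (Suc k) * norm e)" for k u c n
  have "\<forall>k. \<exists>u c n. R k u c n" using claim unfolding R_def by blast
  then have "\<exists>u. \<forall>k. \<exists>c n. R k (u k) c n" by (rule choice)
  then obtain u where "\<forall>k. \<exists>c n. R k (u k) c n" ..
  then have "\<exists>c. \<forall>k. \<exists>n. R k (u k) (c k) n" by (rule choice)
  then obtain c where "\<forall>k. \<exists>n. R k (u k) (c k) n" ..
  then have "\<exists>n. \<forall>k. R k (u k) (c k) (n k)" by (rule choice)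
  then obtain n where Rk: "\<forall>k. R k (u k) (c k) (n k)" ..
  have ucn: "\<And>k. dist (u k) (x k) < 1 / Suc k" "\<And>k. c k \<in> C"
    "\<And>k. dist (c k) (U (u k)) \<le> dist (U xs) (U (u k))"
    "\<And>k. n k \<in> reg_normal_cone E C (c k)" "\<And>k. norm (n k) = 1"
    "\<And>k e. - (n k \<bullet> DU (u k) e) \<le> 2 / real (Suc k) * norm e"
    using Rk unfolding R_def by blast+
  have inv0: "(\<lambda>k. 2 / real (Suc k)) \<longlonglongrightarrow> 0"
    using tendsto_mult_right_zero[OF LIMSEQ_inverse_real_of_nat, of 2] by (simp add: divide_inverse)
  have uxs: "u \<longlonglongrightarrow> xs"
  proof (rule seq_conv_bound[OF _ inv0])
    fix k
    have "dist (u k) xs \<le> dist (u k) (x k) + dist (x k) xs" by (rule dist_triangle)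
    also have "\<dots> \<le> 2 / real (Suc k)" using ucn(1)[of k] x(1)[of k] by simp
    finally show "dist (u k) xs \<le> 2 / real (Suc k)" .
  qed
  have Uu: "(\<lambda>k. U (u k)) \<longlonglongrightarrow> U xs" by (rule isCont_tendsto_compose[OF Uc uxs])
  have cU: "c \<longlonglongrightarrow> U xs"
  proof -
    have d0: "(\<lambda>k. dist (U (u k)) (U xs)) \<longlonglongrightarrow> 0" using tendsto_dist_iff[THEN iffD1, OF Uu] .
    have l2: "(\<lambda>k. 2 * dist (U (u k)) (U xs)) \<longlonglongrightarrow> 0" using tendsto_mult_right_zero[OF d0] by simp
    have b2: "dist (c k) (U xs) \<le> 2 * dist (U (u k)) (U xs)" for k
    proof -
      have "dist (c k) (U xs) \<le> dist (c k) (U (u k)) + dist (U (u k)) (U xs)" by (rule dist_triangle)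
      then show ?thesis using ucn(3)[of k] by (simp add: dist_commute)
    qed
    show ?thesis by (rule seq_conv_bound[OF b2 l2])
  qed
  have ns: "n k \<in> sphere 0 1" for k using ucn(5) by simp
  obtain nn r where nn: "nn \<in> sphere 0 1" and r: "strict_mono r" and lim: "(n \<circ> r) \<longlonglongrightarrow> nn"
    using compact_imp_seq_compact[OF compact_sphere, of 0 1] ns unfolding seq_compact_def by metis
  have nnN: "nn \<in> lim_normal_cone E C (U xs)"
    unfolding lim_normal_cone_def
    using ucn(2,4) lim LIMSEQ_subseq_LIMSEQ[OF cU r]
    by (intro CollectI exI[of _ "c \<circ> r"] exI[of _ "n \<circ> r"]) auto
  have pos: "nn \<bullet> DU xs e \<ge> 0" for e
  proof -
    have l1: "(\<lambda>k. (n \<circ> r) k \<bullet> DU ((u \<circ> r) k) e) \<longlonglongrightarrow> nn \<bullet> DU xs e"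
      using lim isCont_tendsto_compose[OF cont LIMSEQ_subseq_LIMSEQ[OF uxs r]]
      by (intro tendsto_intros) (simp_all add: o_def)
    have l2: "(\<lambda>k. - ((\<lambda>k. 2 / real (Suc k)) \<circ> r) k * norm e) \<longlonglongrightarrow> - 0 * norm e"
      using LIMSEQ_subseq_LIMSEQ[OF inv0 r] by (intro tendsto_intros)
    have hk: "- (2 / real (Suc (r k))) * norm e \<le> n (r k) \<bullet> DU (u (r k)) e" for k
      using ucn(6)[of "r k" e] by linarith
    have "- 0 * norm e \<le> nn \<bullet> DU xs e"
      by (rule LIMSEQ_le[OF l2 l1]) (use hk in \<open>simp add: o_def\<close>)
    then show ?thesis by simp
  qed
  have lin: "linear (DU xs)" using der[of xs] by (rule has_derivative_linear)
  have "\<forall>e. nn \<bullet> DU xs e = 0"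
  proof
    fix e
    have "nn \<bullet> DU xs (- e) \<ge> 0" by (rule pos)
    then have "nn \<bullet> DU xs e \<le> 0" using linear_neg[OF lin, of e] by simp
    with pos[of e] show "nn \<bullet> DU xs e = 0" by simp
  qed
  then have "nn = 0" using cq[OF nnN] by blast
  then show False using nn by simp
qed




lemma td_D:
  assumes "twice_differentiable f"
  shows "(f has_derivative frechet_derivative f (at z)) (at z)"
  using assms frechet_derivative_works unfolding twice_differentiable_def by blast

lemma td_bl:
  assumes "twice_differentiable f"
  shows "blinfun_apply (Blinfun (frechet_derivative f (at z))) = frechet_derivative f (at z)"
  using td_D[OF assms] bounded_linear_Blinfun_apply has_derivative_bounded_linear by blast

lemma td_cont:
  fixes f :: "'a::euclidean_space \<Rightarrow> 'b::real_normed_vector"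
  assumes td: "twice_differentiable f"
  shows "isCont (\<lambda>z. frechet_derivative f (at z) e) x"
proof -
  have "continuous (at x) (\<lambda>z. Blinfun (frechet_derivative f (at z)))"
    using td unfolding twice_differentiable_def by (blast intro: differentiable_imp_continuous_within)
  moreover have "isCont (\<lambda>B. blinfun_apply B e) y" for y :: "'a \<Rightarrow>\<^sub>L 'b"
    by (intro linear_continuous_at bounded_bilinear.bounded_linear_left[OF bounded_bilinear_blinfun_apply])
  ultimately have "isCont (\<lambda>z. blinfun_apply (Blinfun (frechet_derivative f (at z))) e) x"
    using continuous_at_compose[of x "\<lambda>z. Blinfun (frechet_derivative f (at z))" "\<lambda>B. blinfun_apply B e"]
    by (simp add: o_def)
  then show ?thesis using td_bl[OF td] by simp
qed

lemma td_add:
  fixes f g :: "'a::euclidean_space \<Rightarrow> 'b::real_normed_vector"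
  assumes f: "twice_differentiable f" and g: "twice_differentiable g"
  shows "twice_differentiable (\<lambda>z. f z + g z)"
proof -
  have fd: "frechet_derivative (\<lambda>z. f z + g z) (at z) = (\<lambda>v. frechet_derivative f (at z) v + frechet_derivative g (at z) v)" for z
    using has_derivative_add[OF td_D[OF f] td_D[OF g]] frechet_derivative_at by metis
  have bl: "Blinfun (frechet_derivative (\<lambda>z. f z + g z) (at z)) = Blinfun (frechet_derivative f (at z)) + Blinfun (frechet_derivative g (at z))" for z
  proof (rule blinfun_eqI)
    fix i
    have blf: "bounded_linear (frechet_derivative f (at z))" using td_D[OF f] has_derivative_bounded_linear by blast
    have blg: "bounded_linear (frechet_derivative g (at z))" using td_D[OF g] has_derivative_bounded_linear by blast
    show "blinfun_apply (Blinfun (frechet_derivative (\<lambda>z. f z + g z) (at z))) i =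
      blinfun_apply (Blinfun (frechet_derivative f (at z)) + Blinfun (frechet_derivative g (at z))) i"
      unfolding fd using bounded_linear_add[OF blf blg]
      by (simp add: bounded_linear_Blinfun_apply blf blg plus_blinfun.rep_eq)
  qed
  show ?thesis
    unfolding twice_differentiable_def bl
    using f g unfolding twice_differentiable_def
    by (auto intro: differentiable_add)
qed

lemma td_lin:
  fixes f :: "'a::euclidean_space \<Rightarrow> 'b::real_normed_vector" and b :: "'b \<Rightarrow> 'c::real_normed_vector"
  assumes f: "twice_differentiable f" and b: "bounded_linear b"
  shows "twice_differentiable (\<lambda>z. b (f z))"
proof -
  have fd: "frechet_derivative (\<lambda>z. b (f z)) (at z) = (\<lambda>v. b (frechet_derivative f (at z) v))" for z
    using has_derivative_compose[OF td_D[OF f] bounded_linear_imp_has_derivative[OF b]] frechet_derivative_at by metis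
  have bl: "Blinfun (frechet_derivative (\<lambda>z. b (f z)) (at z)) = Blinfun b o\<^sub>L Blinfun (frechet_derivative f (at z))" for z
  proof (rule blinfun_eqI)
    fix i
    have blf: "bounded_linear (frechet_derivative f (at z))" using td_D[OF f] has_derivative_bounded_linear by blast
    have "bounded_linear (\<lambda>v. b (frechet_derivative f (at z) v))"
      using bounded_linear_compose[OF b blf] .
    then show "blinfun_apply (Blinfun (frechet_derivative (\<lambda>z. b (f z)) (at z))) i =
      blinfun_apply (Blinfun b o\<^sub>L Blinfun (frechet_derivative f (at z))) i"
      unfolding fd by (simp add: bounded_linear_Blinfun_apply blf b blinfun_compose.rep_eq)
  qed
  have L: "bounded_linear (\<lambda>X. Blinfun b o\<^sub>L (X :: 'a \<Rightarrow>\<^sub>L 'b))"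
    by (rule bounded_bilinear.bounded_linear_right[OF bounded_bilinear_blinfun_compose])
  have "(\<lambda>z. Blinfun b o\<^sub>L Blinfun (frechet_derivative f (at z))) differentiable (at x)" for x
  proof -
    obtain D where "((\<lambda>z. Blinfun (frechet_derivative f (at z))) has_derivative D) (at x)"
      using f unfolding twice_differentiable_def differentiable_def by blast
    from bounded_linear.has_derivative[OF L this] show ?thesis unfolding differentiable_def by blast
  qed
  moreover have "(\<lambda>z. b (f z)) differentiable (at x)" for x
    using has_derivative_compose[OF td_D[OF f] bounded_linear_imp_has_derivative[OF b]]
    unfolding differentiable_def by blast
  ultimately show ?thesis unfolding twice_differentiable_def bl by blast
qed




lemma taylor2:
  fixes f :: "'a::euclidean_space \<Rightarrow> 'b::real_normed_vector"
  assumes td: "twice_differentiable f" and e: "\<epsilon> > 0"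
  shows "\<exists>\<delta>>0. \<forall>t. 0 < t \<and> t < \<delta> \<longrightarrow>
    norm (f (x + t *\<^sub>R d + (t\<^sup>2/2) *\<^sub>R w) - f x - t *\<^sub>R frechet_derivative f (at x) d
      - (t\<^sup>2/2) *\<^sub>R (frechet_derivative f (at x) w
          + blinfun_apply (frechet_derivative (\<lambda>z. Blinfun (frechet_derivative f (at z))) (at x) d) d))
    \<le> \<epsilon> * t\<^sup>2"
proof -
  define f' where "f' z = frechet_derivative f (at z)" for z
  define D where "D z = Blinfun (f' z)" for z
  define D2 where "D2 = frechet_derivative D (at x)"
  have hf: "(f has_derivative f' z) (at z)" for z unfolding f'_def by (rule td_D[OF td])
  have Dapp: "blinfun_apply (D z) = f' z" for z unfolding D_def f'_def by (rule td_bl[OF td])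
  have hD: "(D has_derivative D2) (at x)"
    using td unfolding twice_differentiable_def D_def D2_def f'_def frechet_derivative_works by blast
  have blD2: "bounded_linear D2" using hD by (rule has_derivative_bounded_linear)
  obtain K where K: "K > 0" "\<And>v. norm (D2 v) \<le> norm v * K"
    using bounded_linear.pos_bounded[OF blD2] by blast
  define M where "M = norm d + norm w + 1"
  have M1: "M \<ge> 1" by (simp add: M_def)
  have Md: "norm d \<le> M" "norm w \<le> M" by (simp_all add: M_def)
  define \<eta> where "\<eta> = \<epsilon> / (2 * M\<^sup>2)"
  have M2: "M\<^sup>2 > 0" using M1 by simp
  have eta: "\<eta> > 0" using e M2 by (simp add: \<eta>_def)
  have etaM: "\<eta> * M\<^sup>2 = \<epsilon> / 2" using M2 by (simp add: \<eta>_def)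
  obtain \<delta>1 where d1: "\<delta>1 > 0" "\<forall>y. norm (y - x) < \<delta>1 \<longrightarrow> norm (D y - D x - D2 (y - x)) \<le> \<eta> * norm (y - x)"
    using hD eta unfolding has_derivative_at_alt by blast
  define \<delta> where "\<delta> = min 1 (min (\<delta>1 / M) (\<epsilon> / (4 * K * M\<^sup>2)))"
  have dpos: "\<delta> > 0" using d1 M1 e K M2 by (simp add: \<delta>_def)
  show ?thesis
  proof (intro exI[of _ \<delta>] conjI dpos allI impI)
    fix t assume t: "0 < t \<and> t < \<delta>"
    have t1: "t \<le> 1" using t by (simp add: \<delta>_def)
    have tM: "t * M < \<delta>1"
    proof -
      have "t < \<delta>1 / M" using t by (simp add: \<delta>_def)
      then show ?thesis using M1 by (simp add: field_simps)
    qed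
    have tK: "t * (4 * K * M\<^sup>2) \<le> \<epsilon>"
    proof -
      have "t \<le> \<epsilon> / (4 * K * M\<^sup>2)" using t by (simp add: \<delta>_def)
      then show ?thesis using K M2 by (simp add: field_simps)
    qed
    define p where "p s = x + s *\<^sub>R d + (s\<^sup>2/2) *\<^sub>R w" for s :: real
    define A where "A = f' x d"
    define V where "V = f' x w + blinfun_apply (D2 d) d"
    define r where "r s = f (p s) - f x - s *\<^sub>R A - (s\<^sup>2/2) *\<^sub>R V" for s :: real
    define r' where "r' s = f' (p s) (d + s *\<^sub>R w) - A - s *\<^sub>R V" for s :: real
    have hp: "(p has_derivative (\<lambda>h. h *\<^sub>R (d + s *\<^sub>R w))) (at s within {0..t})" for s
      unfolding p_def
      by (auto intro!: derivative_eq_intros simp: algebra_simps power2_eq_square)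
    have hr: "(r has_derivative (\<lambda>h. h *\<^sub>R r' s)) (at s within {0..t})" for s
    proof -
      have lin: "linear (f' (p s))" using hf[of "p s"] by (rule has_derivative_linear)
      have h1: "((\<lambda>s. f (p s)) has_derivative (\<lambda>h. f' (p s) (h *\<^sub>R (d + s *\<^sub>R w)))) (at s within {0..t})"
        by (rule has_derivative_compose[OF hp hf])
      have h2: "((\<lambda>s. (s\<^sup>2/2) *\<^sub>R V) has_derivative (\<lambda>h. (h * s) *\<^sub>R V)) (at s within {0..t})"
        by (auto intro!: derivative_eq_intros simp: algebra_simps power2_eq_square)
      have "(r has_derivative (\<lambda>h. f' (p s) (h *\<^sub>R (d + s *\<^sub>R w)) - 0 - h *\<^sub>R A - (h * s) *\<^sub>R V)) (at s within {0..t})"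
        unfolding r_def
        by (intro has_derivative_diff h1 h2 has_derivative_const has_derivative_scaleR_left has_derivative_ident)
      moreover have "(\<lambda>h. f' (p s) (h *\<^sub>R (d + s *\<^sub>R w)) - 0 - h *\<^sub>R A - (h * s) *\<^sub>R V) = (\<lambda>h. h *\<^sub>R r' s)"
      proof (rule ext)
        fix h
        have "f' (p s) (h *\<^sub>R (d + s *\<^sub>R w)) = h *\<^sub>R f' (p s) (d + s *\<^sub>R w)" by (rule linear_cmul[OF lin])
        then show "f' (p s) (h *\<^sub>R (d + s *\<^sub>R w)) - 0 - h *\<^sub>R A - (h * s) *\<^sub>R V = h *\<^sub>R r' s"
          unfolding r'_def by (simp only:) (simp add: algebra_simps)
      qed
      ultimately show ?thesis by simp
    qed
    have bnd: "norm (r' s) \<le> t * (2 * t * K * M\<^sup>2 + \<eta> * M\<^sup>2)" if s: "s \<in> {0..t}" for s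
    proof -
      have s0: "0 \<le> s" "s \<le> t" using s by auto
      have s1: "s \<le> 1" using s0 t1 by simp
      define \<Delta> where "\<Delta> = s *\<^sub>R d + (s\<^sup>2/2) *\<^sub>R w"
      have pD: "p s - x = \<Delta>" by (simp add: p_def \<Delta>_def)
      have s2: "s\<^sup>2/2 \<le> s"
      proof -
        have "s * s \<le> s * 1" using s0 s1 by (intro mult_left_mono) auto
        then show ?thesis using s0 by (simp add: power2_eq_square)
      qed
      have nD: "norm \<Delta> \<le> s * M"
      proof -
        have "norm \<Delta> \<le> s * norm d + (s\<^sup>2/2) * norm w"
          unfolding \<Delta>_def using s0 norm_triangle_ineq[of "s *\<^sub>R d" "(s\<^sup>2/2) *\<^sub>R w"] by simp
        also have "\<dots> \<le> s * norm d + s * norm w" using s2 by (intro add_left_mono mult_right_mono) auto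
        also have "\<dots> \<le> s * M" using s0 by (simp add: M_def distrib_left[symmetric] mult_left_mono)
        finally show ?thesis .
      qed
      have nv: "norm (d + s *\<^sub>R w) \<le> M"
      proof -
        have "norm (d + s *\<^sub>R w) \<le> norm d + s * norm w" using norm_triangle_ineq[of d "s *\<^sub>R w"] s0 by simp
        also have "\<dots> \<le> norm d + norm w" using s0 s1 by (simp add: mult_left_le_one_le)
        finally show ?thesis by (simp add: M_def)
      qed
      define R where "R = D (p s) - D x - D2 \<Delta>"
      have nR: "norm R \<le> \<eta> * (s * M)"
      proof -
        have "s * M \<le> t * M" using s0 M1 by (simp add: mult_right_mono)
        then have "norm (p s - x) < \<delta>1" using pD nD tM by simp
        then have "norm (D (p s) - D x - D2 (p s - x)) \<le> \<eta> * norm (p s - x)" using d1(2) by blast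
        then have "norm R \<le> \<eta> * norm \<Delta>" unfolding R_def pD .
        also have "\<dots> \<le> \<eta> * (s * M)" using nD eta by (simp add: mult_left_mono)
        finally show ?thesis .
      qed
      have lD2: "linear D2" using blD2 by (rule bounded_linear.linear)
      have D2split: "D2 \<Delta> = D2 ((s\<^sup>2/2) *\<^sub>R w) + D2 (s *\<^sub>R d)"
        unfolding \<Delta>_def using linear_add[OF lD2] by (simp add: add.commute)
      have r'eq: "r' s = blinfun_apply R (d + s *\<^sub>R w) + blinfun_apply (D2 ((s\<^sup>2/2) *\<^sub>R w)) (d + s *\<^sub>R w)
          + blinfun_apply (D2 (s *\<^sub>R d)) (s *\<^sub>R w)"
      proof -
        have "f' (p s) (d + s *\<^sub>R w) = blinfun_apply (D (p s)) (d + s *\<^sub>R w)" by (simp add: Dapp)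
        also have "D (p s) = R + D x + D2 \<Delta>" by (simp add: R_def)
        finally have 1: "f' (p s) (d + s *\<^sub>R w) = blinfun_apply R (d + s *\<^sub>R w) + f' x (d + s *\<^sub>R w)
            + blinfun_apply (D2 \<Delta>) (d + s *\<^sub>R w)"
          by (simp add: plus_blinfun.rep_eq Dapp)
        have linx: "linear (f' x)" using hf[of x] by (rule has_derivative_linear)
        have 2: "f' x (d + s *\<^sub>R w) = A + s *\<^sub>R f' x w"
          unfolding A_def using linear_add[OF linx] linear_cmul[OF linx] by simp
        have 3: "blinfun_apply (D2 \<Delta>) (d + s *\<^sub>R w) = blinfun_apply (D2 ((s\<^sup>2/2) *\<^sub>R w)) (d + s *\<^sub>R w)
            + blinfun_apply (D2 (s *\<^sub>R d)) d + blinfun_apply (D2 (s *\<^sub>R d)) (s *\<^sub>R w)"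
          unfolding D2split by (simp add: plus_blinfun.rep_eq blinfun.add_right)
        have 4: "blinfun_apply (D2 (s *\<^sub>R d)) d = s *\<^sub>R blinfun_apply (D2 d) d"
          using linear_cmul[OF lD2, of s d] by (simp add: scaleR_blinfun.rep_eq)
        show ?thesis unfolding r'_def 1 2 3 4 V_def by (simp add: algebra_simps)
      qed
      have n1: "norm (blinfun_apply R (d + s *\<^sub>R w)) \<le> \<eta> * (s * M) * M"
        using norm_blinfun[of R "d + s *\<^sub>R w"] nR nv
        by (meson mult_mono norm_ge_zero order_trans)
      have n2: "norm (blinfun_apply (D2 ((s\<^sup>2/2) *\<^sub>R w)) (d + s *\<^sub>R w)) \<le> ((s\<^sup>2/2) * M * K) * M"
      proof -
        have "norm (D2 ((s\<^sup>2/2) *\<^sub>R w)) \<le> norm ((s\<^sup>2/2) *\<^sub>R w) * K" by (rule K(2))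
        also have "\<dots> \<le> (s\<^sup>2/2) * M * K" using Md K by (simp add: mult_left_mono mult_right_mono)
        finally have a: "norm (D2 ((s\<^sup>2/2) *\<^sub>R w)) \<le> (s\<^sup>2/2) * M * K" .
        show ?thesis using norm_blinfun[of "D2 ((s\<^sup>2/2) *\<^sub>R w)" "d + s *\<^sub>R w"] a nv
          by (meson mult_mono norm_ge_zero order_trans)
      qed
      have n3: "norm (blinfun_apply (D2 (s *\<^sub>R d)) (s *\<^sub>R w)) \<le> (s * M * K) * (s * M)"
      proof -
        have "norm (D2 (s *\<^sub>R d)) \<le> norm (s *\<^sub>R d) * K" by (rule K(2))
        also have "\<dots> \<le> s * M * K" using Md K s0 by (simp add: mult_left_mono mult_right_mono)
        finally have a: "norm (D2 (s *\<^sub>R d)) \<le> s * M * K" .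
        have b: "norm (s *\<^sub>R w) \<le> s * M" using Md s0 by (simp add: mult_left_mono)
        show ?thesis using norm_blinfun[of "D2 (s *\<^sub>R d)" "s *\<^sub>R w"] a b
          by (meson mult_mono norm_ge_zero order_trans)
      qed
      have "norm (r' s) \<le> \<eta> * (s * M) * M + ((s\<^sup>2/2) * M * K) * M + (s * M * K) * (s * M)"
        unfolding r'eq using n1 n2 n3 norm_triangle_le
        by (smt (verit, best) norm_triangle_ineq)
      also have "\<dots> = s * (\<eta> * M\<^sup>2) + s\<^sup>2 * (3/2) * K * M\<^sup>2"
        by (simp add: power2_eq_square algebra_simps)
      also have "\<dots> \<le> t * (\<eta> * M\<^sup>2) + t\<^sup>2 * 2 * K * M\<^sup>2"
      proof -
        have "s * (\<eta> * M\<^sup>2) \<le> t * (\<eta> * M\<^sup>2)" using s0 eta M2 by (simp add: mult_right_mono)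
        moreover have "s\<^sup>2 \<le> t\<^sup>2" using s0 by (simp add: power_mono)
        then have a: "s\<^sup>2 * (3/2) \<le> t\<^sup>2 * 2" using zero_le_power2[of s] by linarith
        have "s\<^sup>2 * (3/2) * (K * M\<^sup>2) \<le> t\<^sup>2 * 2 * (K * M\<^sup>2)" using K M2 a
          by (intro mult_right_mono) auto
        then have "s\<^sup>2 * (3/2) * K * M\<^sup>2 \<le> t\<^sup>2 * 2 * K * M\<^sup>2" by (simp add: mult.assoc)
        ultimately show ?thesis by simp
      qed
      also have "\<dots> = t * (2 * t * K * M\<^sup>2 + \<eta> * M\<^sup>2)" by (simp add: power2_eq_square algebra_simps)
      finally show ?thesis .
    qed
    have onr: "onorm (\<lambda>h. h *\<^sub>R r' s) = norm (r' s)" for s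
      using onorm_scaleR_left[OF bounded_linear_ident, of "r' s"] onorm_id[where 'a=real] by simp
    have "norm (r t - r 0) \<le> t * (2 * t * K * M\<^sup>2 + \<eta> * M\<^sup>2) * norm (t - 0)"
      by (rule differentiable_bound[of "{0..t}" r "\<lambda>s h. h *\<^sub>R r' s"])
         (use hr bnd onr t in auto)
    moreover have "r 0 = 0" by (simp add: r_def p_def)
    ultimately have "norm (r t) \<le> t\<^sup>2 * (2 * t * K * M\<^sup>2 + \<eta> * M\<^sup>2)" using t
      by (simp add: power2_eq_square algebra_simps)
    also have "\<dots> \<le> t\<^sup>2 * \<epsilon>"
    proof -
      have "2 * t * K * M\<^sup>2 \<le> \<epsilon> / 2" using tK by (simp add: algebra_simps)
      then have "2 * t * K * M\<^sup>2 + \<eta> * M\<^sup>2 \<le> \<epsilon>" using etaM by simp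
      then show ?thesis by (simp add: mult_left_mono)
    qed
    finally have "norm (r t) \<le> t\<^sup>2 * \<epsilon>" .
    then show "norm (f (x + t *\<^sub>R d + (t\<^sup>2/2) *\<^sub>R w) - f x - t *\<^sub>R frechet_derivative f (at x) d
      - (t\<^sup>2/2) *\<^sub>R (frechet_derivative f (at x) w
          + blinfun_apply (frechet_derivative (\<lambda>z. Blinfun (frechet_derivative f (at z))) (at x) d) d))
      \<le> \<epsilon> * t\<^sup>2"
    proof -
      have Deq: "(\<lambda>z. Blinfun (frechet_derivative f (at z))) = D" by (simp add: D_def f'_def fun_eq_iff)
      from \<open>norm (r t) \<le> t\<^sup>2 * \<epsilon>\<close> show ?thesis unfolding Deq
        by (simp add: r_def p_def A_def V_def f'_def D2_def mult.commute)
    qed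
  qed
qed




lemma deriv_dir:
  fixes f :: "'a::real_normed_vector \<Rightarrow> 'b::real_normed_vector"
  assumes der: "(f has_derivative f') (at x)" and e: "\<epsilon> > 0"
  shows "\<exists>\<delta>>0. \<forall>t. 0 < t \<and> t < \<delta> \<longrightarrow> norm (f (x + t *\<^sub>R d) - f x - t *\<^sub>R f' d) \<le> \<epsilon> * t"
proof -
  have ne: "norm d + 1 > 0" using norm_ge_zero[of d] by linarith
  obtain d0 where d0: "d0 > 0" "\<forall>y. norm (y - x) < d0 \<longrightarrow> norm (f y - f x - f' (y - x)) \<le> (\<epsilon> / (norm d + 1)) * norm (y - x)"
    using der e ne unfolding has_derivative_at_alt by (metis divide_pos_pos)
  have lin: "linear f'" using der by (rule has_derivative_linear)
  show ?thesis
  proof (intro exI[of _ "d0 / (norm d + 1)"] conjI allI impI)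
    show "d0 / (norm d + 1) > 0" using d0 ne by simp
    fix t assume t: "0 < t \<and> t < d0 / (norm d + 1)"
    have "t * norm d \<le> t * (norm d + 1)" using t by simp
    also have "\<dots> < d0" using t ne by (simp add: field_simps)
    finally have "norm ((x + t *\<^sub>R d) - x) < d0" using t by simp
    then have "norm (f (x + t *\<^sub>R d) - f x - f' (t *\<^sub>R d)) \<le> (\<epsilon> / (norm d + 1)) * (t * norm d)"
      using d0(2) t by (metis add_diff_cancel_left' norm_scaleR abs_of_pos)
    also have "\<dots> \<le> \<epsilon> * t"
    proof -
      have "norm d / (norm d + 1) \<le> 1" using ne by simp
      then have "\<epsilon> * (norm d / (norm d + 1)) \<le> \<epsilon> * 1" using e by (intro mult_left_mono) auto
      then have h: "\<epsilon> * (norm d / (norm d + 1)) \<le> \<epsilon>" by simp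
      have eq: "(\<epsilon> / (norm d + 1)) * (t * norm d) = (\<epsilon> * (norm d / (norm d + 1))) * t"
        by (simp add: field_simps)
      show ?thesis unfolding eq using h t by (intro mult_right_mono) auto
    qed
    finally show "norm (f (x + t *\<^sub>R d) - f x - t *\<^sub>R f' d) \<le> \<epsilon> * t"
      using linear_cmul[OF lin] by simp
  qed
qed

lemma deriv_in_closed_subspace:
  fixes f :: "'a::real_normed_vector \<Rightarrow> 'b::real_normed_vector"
  assumes der: "(f has_derivative f') (at x)" and S: "closed S" "subspace S" and fS: "\<And>z. f z \<in> S"
  shows "f' e \<in> S"
proof -
  have "f' e \<in> closure S"
    unfolding closure_approachable
  proof (intro allI impI)
    fix \<epsilon> :: real assume e: "\<epsilon> > 0"
    obtain \<delta> where d: "\<delta> > 0" "\<forall>t. 0 < t \<and> t < \<delta> \<longrightarrow> norm (f (x + t *\<^sub>R e) - f x - t *\<^sub>R f' e) \<le> (\<epsilon>/2) * t"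
      using deriv_dir[OF der, of "\<epsilon>/2" e] e by auto
    define t where "t = \<delta> / 2"
    have t: "0 < t" "t < \<delta>" using d by (auto simp: t_def)
    define yy where "yy = (1 / t) *\<^sub>R (f (x + t *\<^sub>R e) - f x)"
    have "yy \<in> S" unfolding yy_def using S(2) fS by (intro subspace_scale subspace_diff) auto
    moreover have "dist yy (f' e) < \<epsilon>"
    proof -
      have "yy - f' e = (1 / t) *\<^sub>R (f (x + t *\<^sub>R e) - f x - t *\<^sub>R f' e)"
        using t by (simp add: yy_def algebra_simps)
      then have "dist yy (f' e) = (1 / t) * norm (f (x + t *\<^sub>R e) - f x - t *\<^sub>R f' e)"
        using t by (simp add: dist_norm)
      also have "\<dots> \<le> (1 / t) * ((\<epsilon>/2) * t)" using d(2) t by (intro mult_left_mono) auto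
      also have "\<dots> = \<epsilon> / 2" using t by simp
      finally show ?thesis using e by simp
    qed
    ultimately show "\<exists>y\<in>S. dist y (f' e) < \<epsilon>" by blast
  qed
  then show ?thesis using S(1) by simp
qed

lemma second_in_closed_subspace:
  fixes f :: "'a::euclidean_space \<Rightarrow> 'b::real_normed_vector"
  assumes td: "twice_differentiable f" and S: "closed S" "subspace S" and fS: "\<And>z. f z \<in> S"
  shows "blinfun_apply (frechet_derivative (\<lambda>z. Blinfun (frechet_derivative f (at z))) (at x) d) d \<in> S"
    (is "?V \<in> S")
proof -
  have f'S: "frechet_derivative f (at x) d \<in> S"
    by (rule deriv_in_closed_subspace[OF td_D[OF td] S fS])
  have lin: "linear (frechet_derivative f (at x))" using td_D[OF td] by (rule has_derivative_linear)
  have f0: "frechet_derivative f (at x) 0 = 0" using linear_0[OF lin] .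
  have "?V \<in> closure S"
    unfolding closure_approachable
  proof (intro allI impI)
    fix \<epsilon> :: real assume e: "\<epsilon> > 0"
    obtain \<delta> where d: "\<delta> > 0" "\<forall>t. 0 < t \<and> t < \<delta> \<longrightarrow>
      norm (f (x + t *\<^sub>R d + (t\<^sup>2/2) *\<^sub>R 0) - f x - t *\<^sub>R frechet_derivative f (at x) d
        - (t\<^sup>2/2) *\<^sub>R (frechet_derivative f (at x) 0 + ?V)) \<le> (\<epsilon>/4) * t\<^sup>2"
      using taylor2[OF td, of "\<epsilon>/4" x d 0] e by auto
    define t where "t = \<delta> / 2"
    have t: "0 < t" "t < \<delta>" using d by (auto simp: t_def)
    have t2: "t\<^sup>2 > 0" using t by simp
    define yy where "yy = (2 / t\<^sup>2) *\<^sub>R (f (x + t *\<^sub>R d) - f x - t *\<^sub>R frechet_derivative f (at x) d)"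
    have "yy \<in> S" unfolding yy_def using S(2) fS f'S by (intro subspace_scale subspace_diff) auto
    moreover have "dist yy ?V < \<epsilon>"
    proof -
      have n: "norm (f (x + t *\<^sub>R d) - f x - t *\<^sub>R frechet_derivative f (at x) d - (t\<^sup>2/2) *\<^sub>R ?V) \<le> (\<epsilon>/4) * t\<^sup>2"
        using d(2) t f0 by auto
      have "yy - ?V = (2 / t\<^sup>2) *\<^sub>R (f (x + t *\<^sub>R d) - f x - t *\<^sub>R frechet_derivative f (at x) d - (t\<^sup>2/2) *\<^sub>R ?V)"
        using t2 by (simp add: yy_def algebra_simps)
      then have "dist yy ?V = (2 / t\<^sup>2) * norm (f (x + t *\<^sub>R d) - f x - t *\<^sub>R frechet_derivative f (at x) d - (t\<^sup>2/2) *\<^sub>R ?V)"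
        using t2 by (simp add: dist_norm)
      also have "\<dots> \<le> (2 / t\<^sup>2) * ((\<epsilon>/4) * t\<^sup>2)" using n t2 by (intro mult_left_mono) auto
      also have "\<dots> = \<epsilon> / 2" using t2 by simp
      finally show ?thesis using e by simp
    qed
    ultimately show "\<exists>y\<in>S. dist y ?V < \<epsilon>" by blast
  qed
  then show ?thesis using S(1) by simp
qed

lemma td_lipschitz:
  fixes f :: "'a::euclidean_space \<Rightarrow> 'b::real_normed_vector"
  assumes td: "twice_differentiable f"
  shows "\<exists>L \<delta>. \<delta> > 0 \<and> L \<ge> 0 \<and> (\<forall>a b. dist a x < \<delta> \<longrightarrow> dist b x < \<delta> \<longrightarrow> norm (f a - f b) \<le> L * norm (a - b))"
proof -
  define Df where "Df z = Blinfun (frechet_derivative f (at z))" for z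
  have "continuous (at x) Df"
    using td unfolding twice_differentiable_def Df_def by (blast intro: differentiable_imp_continuous_within)
  then obtain \<delta> where d: "\<delta> > 0" "\<forall>z. dist z x < \<delta> \<longrightarrow> dist (Df z) (Df x) < 1"
    unfolding continuous_at_eps_delta by (meson zero_less_one)
  define L where "L = norm (Df x) + 1"
  have L: "L \<ge> 0" by (simp add: L_def add_nonneg_nonneg)
  have bd: "onorm (frechet_derivative f (at z)) \<le> L" if "z \<in> ball x \<delta>" for z
  proof -
    have "onorm (frechet_derivative f (at z)) = norm (Df z)"
      by (simp add: norm_blinfun.rep_eq Df_def td_bl[OF td])
    also have "norm (Df z) \<le> norm (Df x) + dist (Df z) (Df x)"
      by (metis dist_norm norm_triangle_sub)
    also have "\<dots> \<le> L"
    proof -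
      have "dist z x < \<delta>" using that by (simp add: dist_commute)
      then have "dist (Df z) (Df x) < 1" using d(2) by blast
      then show ?thesis by (simp add: L_def)
    qed
    finally show ?thesis .
  qed
  have "norm (f a - f b) \<le> L * norm (a - b)" if "dist a x < \<delta>" "dist b x < \<delta>" for a b
    by (rule differentiable_bound[OF convex_ball _ bd])
       (use that td_D[OF td] in \<open>auto simp: dist_commute intro: has_derivative_at_withinI\<close>)
  then show ?thesis using d(1) L by blast
qed

lemma zero_tangent:
  assumes "y \<in> C"
  shows "0 \<in> tangent_cone C y"
  unfolding tangent_cone_def
  using LIMSEQ_inverse_real_of_nat assms
  by (intro CollectI exI[of _ "\<lambda>k. inverse (real (Suc k))"] exI[of _ "\<lambda>k. y"]) auto

lemma tangent_in_E:
  assumes "C \<subseteq> E" "closed E" "subspace E" "y \<in> C" "v \<in> tangent_cone C y"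
  shows "v \<in> E"
proof -
  obtain t z where t: "\<forall>k. 0 < t k" and z: "\<forall>k. z k \<in> C"
    and lim: "(\<lambda>k. (1 / t k) *\<^sub>R (z k - y)) \<longlonglongrightarrow> v"
    using assms(5) unfolding tangent_cone_def by blast
  have "(1 / t k) *\<^sub>R (z k - y) \<in> E" for k
    using assms z by (intro subspace_scale subspace_diff) auto
  then show ?thesis using closed_sequentially[OF assms(2) _ lim] by blast
qed

lemma lim_normal_in_E:
  assumes "closed E" "v \<in> lim_normal_cone E C y"
  shows "v \<in> E"
proof -
  obtain yk vk where h: "\<forall>k. vk k \<in> reg_normal_cone E C (yk k)" "vk \<longlonglongrightarrow> v"
    using assms(2) unfolding lim_normal_cone_def by blast
  then have "vk k \<in> E" for k by (auto simp: reg_normal_cone_def)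
  then show ?thesis using closed_sequentially[OF assms(1) _ h(2)] by blast
qed





lemma quad_form_eq: "v \<bullet> ((A::real^'n::finite^'n) *v v) = (\<Sum>i\<in>UNIV. \<Sum>j\<in>UNIV. v$i * (A$i$j * v$j))"
  by (simp add: inner_vec_def matrix_vector_mult_def sum_distrib_left)

lemma closed_sym_mats: "closed (sym_mats :: (real^'n::finite^'n) set)"
proof -
  have eq: "sym_mats = (\<Inter>i. \<Inter>j. {A::real^'n^'n. A$i$j = A$j$i})"
    by (auto simp: sym_mats_def transpose_def vec_eq_iff)
  have c: "closed {A::real^'n^'n. A$i$j = A$j$i}" for i j
    by (intro closed_Collect_eq continuous_intros)
  show ?thesis unfolding eq
    apply (rule closed_INT) apply (rule ballI) apply (rule closed_INT) using c by auto
qed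

lemma subspace_sym_mats: "subspace (sym_mats :: (real^'n::finite^'n) set)"
  unfolding subspace_def sym_mats_def by (auto simp: transpose_def vec_eq_iff)

lemma closed_psd: "closed (psd_cone :: (real^'n::finite^'n) set)"
proof -
  have eq: "psd_cone = sym_mats \<inter> (\<Inter>v. {A::real^'n^'n. 0 \<le> (\<Sum>i\<in>UNIV. \<Sum>j\<in>UNIV. v$i * (A$i$j * v$j))})"
    by (auto simp: psd_cone_def quad_form_eq)
  have c: "closed {A::real^'n^'n. 0 \<le> (\<Sum>i\<in>UNIV. \<Sum>j\<in>UNIV. v$i * (A$i$j * v$j))}" for v
    by (intro closed_Collect_le continuous_intros)
  show ?thesis unfolding eq
    apply (rule closed_Int[OF closed_sym_mats]) apply (rule closed_INT) using c by auto
qed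

lemma closed_nsd: "closed (nsd_cone :: (real^'n::finite^'n) set)"
proof -
  have eq: "nsd_cone = sym_mats \<inter> (\<Inter>v. {A::real^'n^'n. (\<Sum>i\<in>UNIV. \<Sum>j\<in>UNIV. v$i * (A$i$j * v$j)) \<le> 0})"
    by (auto simp: nsd_cone_def quad_form_eq)
  have c: "closed {A::real^'n^'n. (\<Sum>i\<in>UNIV. \<Sum>j\<in>UNIV. v$i * (A$i$j * v$j)) \<le> 0}" for v
    by (intro closed_Collect_le continuous_intros)
  show ?thesis unfolding eq
    apply (rule closed_Int[OF closed_sym_mats]) apply (rule closed_INT) using c by auto
qed

lemma closed_Omega: "closed (Omega_set :: ((real^'n::finite^'n) \<times> (real^'n^'n)) set)"
proof -
  have eq: "Omega_set = (psd_cone \<times> nsd_cone) \<inter> {p::(real^'n^'n) \<times> (real^'n^'n). fst p \<bullet> snd p = 0}"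
    by (auto simp: Omega_set_def)
  have c: "closed {p::(real^'n^'n) \<times> (real^'n^'n). fst p \<bullet> snd p = 0}"
    by (intro closed_Collect_eq continuous_intros)
  show ?thesis unfolding eq by (intro closed_Int closed_Times closed_psd closed_nsd c)
qed

lemma Omega_sub: "(Omega_set :: ((real^'n::finite^'n) \<times> (real^'n^'n)) set) \<subseteq> sym_mats \<times> sym_mats"
  by (auto simp: Omega_set_def psd_cone_def nsd_cone_def)

lemma subspace_mult_space: "subspace (mult_space :: ('y::euclidean_space \<times> ((real^'n::finite^'n) \<times> (real^'n^'n))) set)"
  unfolding mult_space_def
  by (intro subspace_Times subspace_UNIV subspace_sym_mats)

lemma closed_mult_space: "closed (mult_space :: ('y::euclidean_space \<times> ((real^'n::finite^'n) \<times> (real^'n^'n))) set)"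
  unfolding mult_space_def
  by (intro closed_Times closed_UNIV closed_sym_mats)


lemma ev_seq: "X \<longlonglongrightarrow> a \<Longrightarrow> d > 0 \<Longrightarrow> \<exists>N. \<forall>k\<ge>N. dist (X k) a < d"
  for X :: "nat \<Rightarrow> 'a::metric_space"
  unfolding lim_sequentially by blast

theorem corollary5p3:
  fixes \<phi> :: "'x::euclidean_space \<Rightarrow> real"
    and h :: "'x \<Rightarrow> 'y::euclidean_space"
    and \<theta> \<zeta> :: "'x \<Rightarrow> real^'n::finite^'n"
    and K :: "'y set"
    and xs :: 'x
  assumes "twice_differentiable \<phi>" "twice_differentiable h"
    and "twice_differentiable \<theta>" "twice_differentiable \<zeta>"
    and "\<forall>x. \<theta> x \<in> sym_mats" "\<forall>x. \<zeta> x \<in> sym_mats"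
    and "closed K" "convex K" "cone K" "so_regular K"
    and feas: "Ups h \<theta> \<zeta> xs \<in> K \<times> Omega_set"
    and locopt: "\<exists>\<epsilon>>0. \<forall>x. Ups h \<theta> \<zeta> x \<in> K \<times> Omega_set \<and> dist x xs < \<epsilon> \<longrightarrow> \<phi> xs \<le> \<phi> x"
    and cq: "span (lim_normal_cone mult_space (K \<times> Omega_set) (Ups h \<theta> \<zeta> xs))
             \<inter> {\<mu>. adjoint (frechet_derivative (Ups h \<theta> \<zeta>) (at xs)) \<mu> = 0} = {0}"
  shows "\<exists>\<mu>s. {\<mu>. frechet_derivative (\<lambda>z. Lag \<phi> h \<theta> \<zeta> z \<mu>) (at xs) = (\<lambda>_. 0) \<and>
                  \<mu> \<in> reg_normal_cone mult_space (K \<times> Omega_set) (Ups h \<theta> \<zeta> xs)} = {\<mu>s}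
          \<and> {\<mu>. frechet_derivative (\<lambda>z. Lag \<phi> h \<theta> \<zeta> z \<mu>) (at xs) = (\<lambda>_. 0) \<and>
                  \<mu> \<in> lim_normal_cone mult_space (K \<times> Omega_set) (Ups h \<theta> \<zeta> xs)} = {\<mu>s}
          \<and> {\<mu>. frechet_derivative (\<lambda>z. Lag \<phi> h \<theta> \<zeta> z \<mu>) (at xs) = (\<lambda>_. 0) \<and>
                  \<mu> \<in> clarke_normal_cone mult_space (K \<times> Omega_set) (Ups h \<theta> \<zeta> xs)} = {\<mu>s}
          \<and> (\<forall>d \<in> {d. frechet_derivative \<phi> (at xs) d \<le> 0 \<and>
                        frechet_derivative (Ups h \<theta> \<zeta>) (at xs) d
                          \<in> tangent_cone (K \<times> Omega_set) (Ups h \<theta> \<zeta> xs)}.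
               ereal (hess_quad (\<lambda>z. Lag \<phi> h \<theta> \<zeta> z \<mu>s) xs d)
               - support_fun \<mu>s (outer_so_tangent (K \<times> Omega_set) (Ups h \<theta> \<zeta> xs)
                                   (frechet_derivative (Ups h \<theta> \<zeta>) (at xs) d)) \<ge> 0)"
proof -
  note tdp = assms(1) and tdh = assms(2) and tdt = assms(3) and tdz = assms(4)
  define U where "U = Ups h \<theta> \<zeta>"
  define C where "C = K \<times> (Omega_set :: ((real^'n^'n) \<times> (real^'n^'n)) set)"
  define E where "E = (mult_space :: ('y \<times> ((real^'n^'n) \<times> (real^'n^'n))) set)"
  define y where "y = U xs"
  define N where "N = lim_normal_cone E C y"
  define \<phi>' where "\<phi>' = frechet_derivative \<phi> (at xs)"
  define DU where "DU z = (\<lambda>e. (frechet_derivative h (at z) e, frechet_derivative \<theta> (at z) e, frechet_derivative \<zeta> (at z) e))" for z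
  define A where "A = DU xs"
  have derU: "(U has_derivative DU z) (at z)" for z
    unfolding U_def Ups_def DU_def
    by (intro has_derivative_Pair td_D[OF tdh] td_D[OF tdt] td_D[OF tdz])
  have AU: "frechet_derivative U (at z) = DU z" for z using frechet_derivative_at[OF derU] by simp
  have linA: "linear A" unfolding A_def using derU[of xs] has_derivative_linear by blast
  have derp: "(\<phi> has_derivative \<phi>') (at xs)" unfolding \<phi>'_def by (rule td_D[OF tdp])
  have linp: "linear \<phi>'" using derp has_derivative_linear by blast
  have Cc: "closed C" unfolding C_def using assms(7) closed_Omega by (rule closed_Times)
  have CE: "C \<subseteq> E" unfolding C_def E_def mult_space_def using Omega_sub by auto
  have Es: "subspace E" unfolding E_def by (rule subspace_mult_space)
  have Ec: "closed E" unfolding E_def by (rule closed_mult_space)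
  have UE: "U z \<in> E" for z using assms(5,6) by (simp add: U_def Ups_def E_def mult_space_def)
  have yC: "y \<in> C" using feas by (simp add: y_def U_def C_def)
  have AE: "A e \<in> E" for e
  proof -
    have "frechet_derivative \<theta> (at xs) e \<in> sym_mats"
      by (rule deriv_in_closed_subspace[OF td_D[OF tdt] closed_sym_mats subspace_sym_mats]) (use assms(5) in auto)
    moreover have "frechet_derivative \<zeta> (at xs) e \<in> sym_mats"
      by (rule deriv_in_closed_subspace[OF td_D[OF tdz] closed_sym_mats subspace_sym_mats]) (use assms(6) in auto)
    ultimately show ?thesis by (simp add: A_def DU_def E_def mult_space_def)
  qed
  have NE: "N \<subseteq> E" unfolding N_def using lim_normal_in_E[OF Ec] by blast
  have spanNE: "span N \<subseteq> E" using NE Es by (simp add: span_minimal)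
  have cq0: "span N \<inter> {\<mu>. adjoint A \<mu> = 0} = {0}"
    using cq unfolding N_def E_def C_def y_def A_def AU[symmetric] U_def .
  have cq': "v = 0" if "v \<in> span N" "\<forall>e. A e \<bullet> v = 0" for v
  proof -
    have "adjoint A v \<bullet> adjoint A v = 0" using adjoint_works[OF linA] that(2) by metis
    then have "adjoint A v = 0" by simp
    then show ?thesis using cq0 that(1) by blast
  qed
  have cqN: "v = 0" if "v \<in> lim_normal_cone E C (U xs)" "\<forall>e. v \<bullet> DU xs e = 0" for v
  proof -
    have "v \<in> span N" using that(1) by (simp add: N_def y_def span_base)
    moreover have "\<forall>e. A e \<bullet> v = 0" using that(2) by (simp add: A_def inner_commute)
    ultimately show ?thesis by (rule cq')
  qed
  have contDU: "isCont (\<lambda>z. DU z e) xs" for e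
    unfolding DU_def by (intro continuous_intros td_cont tdh tdt tdz)
  obtain \<kappa> \<delta>0 where sr: "\<kappa> > 0" "\<delta>0 > 0"
    "\<forall>x. dist x xs < \<delta>0 \<longrightarrow> (\<exists>x'. U x' \<in> C \<and> dist x' x \<le> \<kappa> * infdist (U x) C)"
    using metric_subreg[OF Cc CE Es UE _ derU contDU cqN] yC unfolding y_def by blast
  obtain L\<phi> \<delta>L where lip: "\<delta>L > 0" "L\<phi> \<ge> 0"
    "\<forall>a b. dist a xs < \<delta>L \<longrightarrow> dist b xs < \<delta>L \<longrightarrow> norm (\<phi> a - \<phi> b) \<le> L\<phi> * norm (a - b)"
    using td_lipschitz[OF tdp, of xs] by blast
  obtain \<epsilon>o where eo: "\<epsilon>o > 0" "\<forall>x. U x \<in> C \<and> dist x xs < \<epsilon>o \<longrightarrow> \<phi> xs \<le> \<phi> x"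
    using locopt unfolding U_def C_def by blast
  have Uc: "isCont U xs" using has_derivative_continuous[OF derU] .
  define cP where "cP = L\<phi> * \<kappa>"
  have cP0: "cP \<ge> 0" using lip sr by (simp add: cP_def)
  have penalty: "\<exists>\<delta>P>0. \<forall>x. dist x xs < \<delta>P \<longrightarrow> \<phi> xs \<le> \<phi> x + cP * infdist (U x) C"
  proof -
    define m where "m = min \<delta>0 (min \<delta>L \<epsilon>o)"
    have m0: "m > 0" using sr lip eo by (simp add: m_def)
    have k1: "2 * (\<kappa> + 1) > 0" using sr by simp
    obtain \<delta>U where dU: "\<delta>U > 0" "\<forall>x. dist x xs < \<delta>U \<longrightarrow> dist (U x) (U xs) < m / (2 * (\<kappa> + 1))"
      using Uc m0 k1 unfolding continuous_at_eps_delta by (meson divide_pos_pos)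
    show ?thesis
    proof (intro exI[of _ "min (m/2) \<delta>U"] conjI allI impI)
      show "min (m/2) \<delta>U > 0" using m0 dU by simp
      fix x assume x: "dist x xs < min (m/2) \<delta>U"
      have xm: "dist x xs < m / 2" using x by simp
      have mle: "m \<le> \<delta>0" "m \<le> \<delta>L" "m \<le> \<epsilon>o" by (simp_all add: m_def)
      have x0: "dist x xs < \<delta>0" using xm mle m0 by linarith
      obtain x' where x': "U x' \<in> C" "dist x' x \<le> \<kappa> * infdist (U x) C" using sr(3) x0 by blast
      have inf1: "infdist (U x) C < m / (2 * (\<kappa> + 1))"
      proof -
        have "infdist (U x) C \<le> dist (U x) (U xs)" using infdist_le yC by (simp add: y_def)
        also have "\<dots> < m / (2 * (\<kappa> + 1))" using dU x by simp
        finally show ?thesis .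
      qed
      have "\<kappa> * infdist (U x) C \<le> \<kappa> * (m / (2 * (\<kappa> + 1)))"
        using inf1 sr by (intro mult_left_mono) auto
      also have "\<dots> < m / 2"
      proof -
        have "\<kappa> * m < (\<kappa> + 1) * m" using m0 by simp
        then show ?thesis using sr m0 by (simp add: field_simps)
      qed
      finally have dxx: "dist x' x < m / 2" using x' by simp
      have dx'xs: "dist x' xs < m"
      proof -
        have "dist x' xs \<le> dist x' x + dist x xs" by (rule dist_triangle)
        then show ?thesis using dxx x by simp
      qed
      have "\<phi> xs \<le> \<phi> x'" using eo(2) x' dx'xs mle by simp
      moreover have "norm (\<phi> x' - \<phi> x) \<le> L\<phi> * norm (x' - x)"
        using lip(3) dx'xs xm mle m0 by simp
      moreover have "L\<phi> * norm (x' - x) \<le> cP * infdist (U x) C"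
        using x' lip(2) by (simp add: cP_def dist_norm mult.assoc mult_left_mono)
      ultimately show "\<phi> xs \<le> \<phi> x + cP * infdist (U x) C" by simp
    qed
  qed
  then obtain \<delta>P where dP: "\<delta>P > 0" "\<forall>x. dist x xs < \<delta>P \<longrightarrow> \<phi> xs \<le> \<phi> x + cP * infdist (U x) C"
    by blast
  have E1: "\<phi>' d \<ge> 0" if Ad: "A d \<in> tangent_cone C y" for d
  proof (rule ccontr)
    assume "\<not> \<phi>' d \<ge> 0"
    define \<gamma> where "\<gamma> = - \<phi>' d"
    have g0: "\<gamma> > 0" using \<open>\<not> \<phi>' d \<ge> 0\<close> by (simp add: \<gamma>_def)
    obtain t c where t: "\<forall>k. 0 < t k" "t \<longlonglongrightarrow> 0" and c: "\<forall>k. c k \<in> C"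
      and lim: "(\<lambda>k. (1 / t k) *\<^sub>R (c k - y)) \<longlonglongrightarrow> A d"
      using Ad unfolding tangent_cone_def by blast
    define \<epsilon>2 where "\<epsilon>2 = \<gamma> / (8 * (cP + 1))"
    have e2: "\<epsilon>2 > 0" using g0 cP0 by (simp add: \<epsilon>2_def)
    have e2c: "cP * (2 * \<epsilon>2) \<le> \<gamma> / 4"
    proof -
      have "2 * \<epsilon>2 * (cP + 1) = \<gamma> / 4" using cP0 by (simp add: \<epsilon>2_def field_simps)
      moreover have "cP * (2 * \<epsilon>2) \<le> (cP + 1) * (2 * \<epsilon>2)" using e2 by simp
      ultimately show ?thesis by (simp add: mult.commute)
    qed
    obtain \<delta>1 where d1: "\<delta>1 > 0" "\<forall>s. 0 < s \<and> s < \<delta>1 \<longrightarrow> norm (\<phi> (xs + s *\<^sub>R d) - \<phi> xs - s *\<^sub>R \<phi>' d) \<le> (\<gamma>/4) * s"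
      using deriv_dir[OF derp, of "\<gamma>/4" d] g0 by auto
    obtain \<delta>2 where d2: "\<delta>2 > 0" "\<forall>s. 0 < s \<and> s < \<delta>2 \<longrightarrow> norm (U (xs + s *\<^sub>R d) - U xs - s *\<^sub>R A d) \<le> \<epsilon>2 * s"
      using deriv_dir[OF derU[of xs], of \<epsilon>2 d] e2 unfolding A_def by blast
    have nd: "norm d + 1 > 0" using norm_ge_zero[of d] by linarith
    have mpos: "min \<delta>1 (min \<delta>2 (\<delta>P / (norm d + 1))) > 0" using d1 d2 dP nd by simp
    obtain N1 where N1: "\<forall>k\<ge>N1. dist (t k) 0 < min \<delta>1 (min \<delta>2 (\<delta>P / (norm d + 1)))"
      using ev_seq[OF t(2) mpos] by blast
    obtain N2 where N2: "\<forall>k\<ge>N2. dist ((1 / t k) *\<^sub>R (c k - y)) (A d) < \<epsilon>2"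
      using ev_seq[OF lim e2] by blast
    define s where "s = t (max N1 N2)"
    have s0: "s > 0" using t(1) by (simp add: s_def)
    have "dist s 0 < min \<delta>1 (min \<delta>2 (\<delta>P / (norm d + 1)))"
      using N1 unfolding s_def by (meson max.cobounded1)
    then have sm: "s < \<delta>1" "s < \<delta>2" "s < \<delta>P / (norm d + 1)" using s0 by auto
    have sc: "norm ((1 / s) *\<^sub>R (c (max N1 N2) - y) - A d) < \<epsilon>2" using N2 by (simp add: s_def dist_norm)
    define x where "x = xs + s *\<^sub>R d"
    have dx: "dist x xs < \<delta>P"
    proof -
      have "dist x xs = s * norm d" using s0 by (simp add: x_def dist_norm)
      also have "\<dots> \<le> s * (norm d + 1)" using s0 by simp
      also have "\<dots> < \<delta>P" using sm(3) nd by (simp add: field_simps)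
      finally show ?thesis .
    qed
    have p1: "\<phi> xs \<le> \<phi> x + cP * infdist (U x) C" using dP(2) dx by blast
    have p2: "\<phi> x \<le> \<phi> xs + s * \<phi>' d + (\<gamma>/4) * s"
    proof -
      have "norm (\<phi> (xs + s *\<^sub>R d) - \<phi> xs - s *\<^sub>R \<phi>' d) \<le> (\<gamma>/4) * s" using d1(2) s0 sm(1) by blast
      then have "\<bar>\<phi> (xs + s *\<^sub>R d) - \<phi> xs - s * \<phi>' d\<bar> \<le> (\<gamma>/4) * s"
        by (simp only: real_norm_def real_scaleR_def)
      then have "\<phi> (xs + s *\<^sub>R d) - \<phi> xs - s * \<phi>' d \<le> (\<gamma>/4) * s" by (rule abs_le_D1)
      then show ?thesis unfolding x_def by linarith
    qed
    have p3: "infdist (U x) C \<le> 2 * \<epsilon>2 * s"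
    proof -
      have "infdist (U x) C \<le> dist (U x) (c (max N1 N2))" using c infdist_le by blast
      also have "\<dots> = norm ((U x - U xs - s *\<^sub>R A d) - (c (max N1 N2) - y - s *\<^sub>R A d))"
        by (simp add: dist_norm y_def algebra_simps)
      also have "\<dots> \<le> norm (U x - U xs - s *\<^sub>R A d) + norm (c (max N1 N2) - y - s *\<^sub>R A d)"
        by (rule norm_triangle_ineq4)
      also have "norm (U x - U xs - s *\<^sub>R A d) \<le> \<epsilon>2 * s" using d2(2) s0 sm(2) by (simp add: x_def)
      also have "norm (c (max N1 N2) - y - s *\<^sub>R A d) = s * norm ((1 / s) *\<^sub>R (c (max N1 N2) - y) - A d)"
      proof -
        have "c (max N1 N2) - y - s *\<^sub>R A d = s *\<^sub>R ((1 / s) *\<^sub>R (c (max N1 N2) - y) - A d)"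
          using s0 by (simp add: algebra_simps)
        then show ?thesis using s0 by simp
      qed
      also have "s * norm ((1 / s) *\<^sub>R (c (max N1 N2) - y) - A d) \<le> s * \<epsilon>2"
        using sc s0 by (intro mult_left_mono) auto
      finally show ?thesis by (simp add: algebra_simps)
    qed
    have "cP * infdist (U x) C \<le> cP * (2 * \<epsilon>2 * s)" using p3 cP0 by (intro mult_left_mono) auto
    also have "\<dots> = (cP * (2 * \<epsilon>2)) * s" by simp
    also have "\<dots> \<le> (\<gamma> / 4) * s" using e2c s0 by (intro mult_right_mono) auto
    finally have "cP * infdist (U x) C \<le> (\<gamma> / 4) * s" .
    with p1 p2 have "\<phi> xs \<le> \<phi> xs + s * \<phi>' d + (\<gamma>/4) * s + (\<gamma> / 4) * s" by simp
    moreover have "s * \<phi>' d = - (\<gamma> * s)" by (simp add: \<gamma>_def)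
    ultimately have "\<gamma> * s \<le> (\<gamma> / 2) * s" by simp
    then show False using g0 s0 by (simp add: mult_le_cancel_right)
  qed
  have decomp: "\<exists>w l. z = A w + l \<and> l \<in> E \<and> (\<forall>u\<in>N. l \<bullet> u = 0)" if zE: "z \<in> E" for z
  proof -
    define L where "L = {l. \<forall>u\<in>N. l \<bullet> u = 0}"
    have Ls: "subspace L" unfolding L_def subspace_def by (auto simp: inner_add_left)
    have As: "subspace (range A)" by (rule linear_subspace_image[OF linA subspace_UNIV])
    obtain p q where pq: "p \<in> span (range A \<union> L)" "\<And>w. w \<in> span (range A \<union> L) \<Longrightarrow> orthogonal q w" "z = p + q"
      using orthogonal_subspace_decomp_exists by metis
    have qA: "\<forall>e. A e \<bullet> q = 0"
    proof
      fix e
      have "A e \<in> span (range A \<union> L)" by (simp add: span_base)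
      then have "orthogonal q (A e)" by (rule pq(2))
      then show "A e \<bullet> q = 0" by (simp add: orthogonal_def inner_commute)
    qed
    have qL: "\<forall>l\<in>L. q \<bullet> l = 0"
    proof
      fix l assume "l \<in> L"
      then have "l \<in> span (range A \<union> L)" by (simp add: span_base)
      then have "orthogonal q l" by (rule pq(2))
      then show "q \<bullet> l = 0" by (simp add: orthogonal_def)
    qed
    have "q \<in> span N"
    proof -
      obtain a b where ab: "a \<in> span N" "\<And>w. w \<in> span N \<Longrightarrow> orthogonal b w" "q = a + b"
        using orthogonal_subspace_decomp_exists by metis
      have bL: "b \<in> L" unfolding L_def
      proof (intro CollectI ballI)
        fix u assume "u \<in> N"
        then have "u \<in> span N" by (simp add: span_base)
        then have "orthogonal b u" by (rule ab(2))
        then show "b \<bullet> u = 0" by (simp add: orthogonal_def)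
      qed
      have "q \<bullet> b = 0" using qL bL by blast
      moreover have "a \<bullet> b = 0" using ab(2)[OF ab(1)] by (simp add: orthogonal_def inner_commute)
      ultimately have "b \<bullet> b = 0" using ab(3) by (simp add: inner_add_left)
      then have "b = 0" by simp
      then show ?thesis using ab by simp
    qed
    then have q0: "q = 0" using cq' qA by blast
    have "span (range A \<union> L) = {x + y |x y. x \<in> range A \<and> y \<in> L}"
    proof -
      have sA: "span (range A) = range A" using As by (simp only: span_eq_iff)
      have sL: "span L = L" using Ls by (simp only: span_eq_iff)
      show ?thesis unfolding span_Un sA sL ..
    qed
    then obtain w l where wl: "p = A w + l" "l \<in> L" using pq(1) by blast
    have "l = z - A w" using wl pq(3) q0 by simp
    then have "l \<in> E" using zE AE Es by (simp add: subspace_diff)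
    moreover have "\<forall>u\<in>N. l \<bullet> u = 0" using wl(2) by (simp add: L_def)
    moreover have "z = A w + l" using wl(1) pq(3) q0 by simp
    ultimately show ?thesis by blast
  qed
  define gp where "gp = adjoint \<phi>' 1"
  have gp: "\<phi>' e = e \<bullet> gp" for e using adjoint_works[OF linp, of e 1] by (simp add: gp_def)
  define SA where "SA = adjoint A ` span N"
  have linAA: "linear (adjoint A)" by (rule adjoint_linear[OF linA])
  have SAs: "subspace SA" unfolding SA_def by (rule linear_subspace_image[OF linAA subspace_span])
  obtain p q where pq: "p \<in> span SA" "\<And>w. w \<in> span SA \<Longrightarrow> orthogonal q w" "gp = p + q"
    using orthogonal_subspace_decomp_exists by metis
  have Aqperp: "A q \<bullet> u = 0" if "u \<in> N" for u
  proof -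
    have "adjoint A u \<in> span SA" using that by (auto simp: SA_def span_base)
    then have "q \<bullet> adjoint A u = 0" using pq(2) by (simp add: orthogonal_def)
    then show ?thesis using adjoint_works[OF linA, of q u] by simp
  qed
  have zT: "0 \<in> tangent_cone C y" by (rule zero_tangent[OF yC])
  have "0 + A q \<in> tangent_cone C y"
    by (rule tangent_shift[OF Cc CE Es yC AE _ zT]) (simp add: N_def[symmetric] Aqperp)
  then have q1: "\<phi>' q \<ge> 0" using E1 by simp
  have "0 + (- A q) \<in> tangent_cone C y"
    by (rule tangent_shift[OF Cc CE Es yC _ _ zT]) (use AE Es Aqperp in \<open>auto simp: N_def[symmetric] subspace_neg\<close>)
  then have "A (- q) \<in> tangent_cone C y" using linear_neg[OF linA] by simp
  then have q2: "\<phi>' (- q) \<ge> 0" using E1 by simp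
  have "\<phi>' q = 0" using q1 q2 linear_neg[OF linp, of q] by simp
  then have "q \<bullet> gp = 0" using gp by simp
  moreover have "q \<bullet> p = 0" using pq(2)[OF pq(1)] by (simp add: orthogonal_def)
  ultimately have "q \<bullet> q = 0" using pq(3) by (simp add: inner_add_right)
  then have "q = 0" by simp
  then have "gp \<in> span SA" using pq(1,3) by simp
  moreover have spSA: "span SA = SA" using SAs by (simp only: span_eq_iff)
  ultimately have "gp \<in> SA" by simp
  then obtain s0 where s0: "s0 \<in> span N" "gp = adjoint A s0" unfolding SA_def by blast
  define \<mu>s where "\<mu>s = - s0"
  have muspan: "\<mu>s \<in> span N" using s0 by (simp add: \<mu>s_def span_neg)
  have fo: "\<phi>' e + \<mu>s \<bullet> A e = 0" for e
    using gp[of e] s0(2) adjoint_works[OF linA, of e s0] by (simp add: \<mu>s_def inner_commute)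
  have perp_span: "l \<bullet> v = 0" if "\<forall>u\<in>N. l \<bullet> u = 0" "v \<in> span N" for l v
    using orthogonal_to_span[OF that(2), of l] that(1) by (simp add: orthogonal_def)
  have musreg: "\<mu>s \<in> reg_normal_cone E C y"
    unfolding reg_normal_cone_def
  proof (intro CollectI conjI ballI)
    show "\<mu>s \<in> E" using muspan spanNE by auto
    fix v assume v: "v \<in> tangent_cone C y"
    have vE: "v \<in> E" by (rule tangent_in_E[OF CE Ec Es yC v])
    obtain w l where wl: "v = A w + l" "l \<in> E" "\<forall>u\<in>N. l \<bullet> u = 0" using decomp[OF vE] by blast
    have "v + (- l) \<in> tangent_cone C y"
      by (rule tangent_shift[OF Cc CE Es yC _ _ v]) (use wl Es in \<open>auto simp: N_def[symmetric] subspace_neg\<close>)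
    then have "A w \<in> tangent_cone C y" using wl by simp
    then have "\<phi>' w \<ge> 0" using E1 by blast
    moreover have "\<mu>s \<bullet> l = 0" using perp_span[OF wl(3) muspan] by (simp add: inner_commute)
    ultimately show "\<mu>s \<bullet> v \<le> 0" using fo[of w] wl(1) by (simp add: inner_add_right)
  qed
  have gL: "frechet_derivative (\<lambda>z. Lag \<phi> h \<theta> \<zeta> z \<mu>) (at xs) = (\<lambda>d. \<phi>' d + \<mu> \<bullet> A d)" for \<mu>
  proof -
    obtain a b c where mu: "\<mu> = (a, b, c)" by (cases \<mu>) auto
    have eq: "(\<lambda>z. Lag \<phi> h \<theta> \<zeta> z \<mu>) = (\<lambda>z. \<phi> z + a \<bullet> h z + (b \<bullet> \<theta> z + c \<bullet> \<zeta> z))"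
      by (simp add: Lag_def mu fun_eq_iff)
    have D: "((\<lambda>z. \<phi> z + a \<bullet> h z + (b \<bullet> \<theta> z + c \<bullet> \<zeta> z)) has_derivative
        (\<lambda>d. \<phi>' d + a \<bullet> frechet_derivative h (at xs) d + (b \<bullet> frechet_derivative \<theta> (at xs) d + c \<bullet> frechet_derivative \<zeta> (at xs) d))) (at xs)"
      by (intro has_derivative_add derp has_derivative_inner_right td_D tdh tdt tdz)
    show ?thesis
      unfolding eq frechet_derivative_at[OF D, symmetric] by (simp add: mu A_def DU_def add.assoc fun_eq_iff)
  qed
  have focond: "frechet_derivative (\<lambda>z. Lag \<phi> h \<theta> \<zeta> z \<mu>) (at xs) = (\<lambda>_. 0) \<longleftrightarrow> (\<forall>d. \<phi>' d + \<mu> \<bullet> A d = 0)" for \<mu>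
    unfolding gL by (simp add: fun_eq_iff)
  have regsub: "reg_normal_cone E C y \<subseteq> N"
  proof
    fix v assume v: "v \<in> reg_normal_cone E C y"
    show "v \<in> N" unfolding N_def lim_normal_cone_def
      using yC v by (intro CollectI exI[of _ "\<lambda>k. y"] exI[of _ "\<lambda>k. v"]) auto
  qed
  have limsub: "N \<subseteq> clarke_normal_cone E C y"
    unfolding N_def clarke_normal_cone_def
    using hull_subset[of "lim_normal_cone E C y" convex] closure_subset[of "convex hull (lim_normal_cone E C y)"]
    by (rule order_trans)
  have clsub: "clarke_normal_cone E C y \<subseteq> span N"
  proof -
    have "convex hull N \<subseteq> span N" by (rule hull_minimal[of N "span N" convex, OF span_superset subspace_imp_convex[OF subspace_span]])
    then show ?thesis unfolding clarke_normal_cone_def N_def[symmetric] by (rule closure_minimal) simp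
  qed
  have uniq: "\<mu> = \<mu>s" if "\<forall>d. \<phi>' d + \<mu> \<bullet> A d = 0" "\<mu> \<in> clarke_normal_cone E C y" for \<mu>
  proof -
    have "\<mu> - \<mu>s \<in> span N" using that(2) clsub muspan by (auto intro: span_diff)
    moreover have "\<forall>e. A e \<bullet> (\<mu> - \<mu>s) = 0"
    proof
      fix e
      have "\<phi>' e + \<mu> \<bullet> A e = 0" "\<phi>' e + \<mu>s \<bullet> A e = 0" using that(1) fo by auto
      then show "A e \<bullet> (\<mu> - \<mu>s) = 0" by (simp add: inner_diff_right inner_commute)
    qed
    ultimately have "\<mu> - \<mu>s = 0" by (rule cq')
    then show ?thesis by simp
  qed
  have setgen: "{\<mu>. frechet_derivative (\<lambda>z. Lag \<phi> h \<theta> \<zeta> z \<mu>) (at xs) = (\<lambda>_. 0) \<and> \<mu> \<in> R} = {\<mu>s}"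
    if R1: "\<mu>s \<in> R" and R2: "R \<subseteq> clarke_normal_cone E C y" for R
  proof (intro equalityI subsetI)
    fix \<mu> assume "\<mu> \<in> {\<mu>. frechet_derivative (\<lambda>z. Lag \<phi> h \<theta> \<zeta> z \<mu>) (at xs) = (\<lambda>_. 0) \<and> \<mu> \<in> R}"
    then have m1: "\<forall>d. \<phi>' d + \<mu> \<bullet> A d = 0" and m2: "\<mu> \<in> R" using focond by auto
    have "\<mu> \<in> clarke_normal_cone E C y" using m2 R2 by blast
    then have "\<mu> = \<mu>s" by (rule uniq[OF m1])
    then show "\<mu> \<in> {\<mu>s}" by simp
  next
    fix \<mu> assume "\<mu> \<in> {\<mu>s}"
    then have "\<mu> = \<mu>s" by simp
    moreover have "frechet_derivative (\<lambda>z. Lag \<phi> h \<theta> \<zeta> z \<mu>s) (at xs) = (\<lambda>_. 0)"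
      using focond fo by blast
    ultimately show "\<mu> \<in> {\<mu>. frechet_derivative (\<lambda>z. Lag \<phi> h \<theta> \<zeta> z \<mu>) (at xs) = (\<lambda>_. 0) \<and> \<mu> \<in> R}"
      using R1 by simp
  qed
  have set1: "{\<mu>. frechet_derivative (\<lambda>z. Lag \<phi> h \<theta> \<zeta> z \<mu>) (at xs) = (\<lambda>_. 0) \<and> \<mu> \<in> reg_normal_cone E C y} = {\<mu>s}"
    by (rule setgen[OF musreg]) (use regsub limsub in blast)
  have set2: "{\<mu>. frechet_derivative (\<lambda>z. Lag \<phi> h \<theta> \<zeta> z \<mu>) (at xs) = (\<lambda>_. 0) \<and> \<mu> \<in> N} = {\<mu>s}"
    by (rule setgen) (use regsub limsub musreg in blast)+
  have set3: "{\<mu>. frechet_derivative (\<lambda>z. Lag \<phi> h \<theta> \<zeta> z \<mu>) (at xs) = (\<lambda>_. 0) \<and> \<mu> \<in> clarke_normal_cone E C y} = {\<mu>s}"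
    by (rule setgen) (use regsub limsub musreg in blast)+
  have SO: "\<forall>d \<in> {d. \<phi>' d \<le> 0 \<and> A d \<in> tangent_cone C y}.
               ereal (hess_quad (\<lambda>z. Lag \<phi> h \<theta> \<zeta> z \<mu>s) xs d)
               - support_fun \<mu>s (outer_so_tangent C y (A d)) \<ge> 0"
  proof (intro ballI)
    fix d assume dcrit: "d \<in> {d. \<phi>' d \<le> 0 \<and> A d \<in> tangent_cone C y}"
    then have d1: "\<phi>' d \<le> 0" and d2: "A d \<in> tangent_cone C y" by auto
    have pd0: "\<phi>' d = 0" using d1 E1[OF d2] by simp
    have muAd: "\<mu>s \<bullet> A d = 0" using fo[of d] pd0 by simp
    define LL where "LL = (\<lambda>z. Lag \<phi> h \<theta> \<zeta> z \<mu>s)"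
    define Q where "Q = hess_quad LL xs d"
    have tdl: "twice_differentiable LL"
    proof -
      obtain a b c where mu: "\<mu>s = (a, b, c)" by (cases \<mu>s) auto
      have eq: "LL = (\<lambda>z. \<phi> z + a \<bullet> h z + (b \<bullet> \<theta> z + c \<bullet> \<zeta> z))"
        by (simp add: LL_def Lag_def mu fun_eq_iff)
      have t1: "twice_differentiable (\<lambda>z. a \<bullet> h z)" by (rule td_lin[OF tdh bounded_linear_inner_right])
      have t2: "twice_differentiable (\<lambda>z. b \<bullet> \<theta> z)" by (rule td_lin[OF tdt bounded_linear_inner_right])
      have t3: "twice_differentiable (\<lambda>z. c \<bullet> \<zeta> z)" by (rule td_lin[OF tdz bounded_linear_inner_right])
      have t12: "twice_differentiable (\<lambda>z. \<phi> z + a \<bullet> h z)" using td_add[OF tdp t1] by simp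
      have t23: "twice_differentiable (\<lambda>z. b \<bullet> \<theta> z + c \<bullet> \<zeta> z)" using td_add[OF t2 t3] by simp
      show ?thesis unfolding eq using td_add[OF t12 t23] by simp
    qed
    have l'0: "frechet_derivative LL (at xs) = (\<lambda>_. 0)" unfolding LL_def focond using fo by blast
    have lU: "LL x = \<phi> x + \<mu>s \<bullet> U x" for x
      by (simp add: LL_def Lag_def U_def Ups_def inner_prod_def)
    have bound: "\<mu>s \<bullet> z \<le> Q" if zT: "z \<in> outer_so_tangent C y (A d)" for z
    proof (rule ccontr)
      assume "\<not> \<mu>s \<bullet> z \<le> Q"
      define \<gamma> where "\<gamma> = \<mu>s \<bullet> z - Q"
      have g0: "\<gamma> > 0" using \<open>\<not> \<mu>s \<bullet> z \<le> Q\<close> by (simp add: \<gamma>_def)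
      have zE: "z \<in> E"
      proof -
        obtain t where t: "\<forall>k. 0 < t k" "t \<longlonglongrightarrow> 0"
          and lim: "(\<lambda>k. infdist (y + t k *\<^sub>R A d + ((t k)\<^sup>2 / 2) *\<^sub>R z) C / (t k)\<^sup>2) \<longlonglongrightarrow> 0"
          using zT unfolding outer_so_tangent_def by blast
        have "z \<in> closure E"
          unfolding closure_approachable
        proof (intro allI impI)
          fix \<epsilon> :: real assume e: "\<epsilon> > 0"
          obtain N where N: "\<forall>k\<ge>N. dist (infdist (y + t k *\<^sub>R A d + ((t k)\<^sup>2 / 2) *\<^sub>R z) C / (t k)\<^sup>2) 0 < \<epsilon> / 2"
            using ev_seq[OF lim, of "\<epsilon>/2"] e by auto
          define s where "s = t N"
          have s0: "s > 0" using t(1) by (simp add: s_def)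
          have s2: "s\<^sup>2 > 0" using s0 by simp
          define a where "a = y + s *\<^sub>R A d + (s\<^sup>2 / 2) *\<^sub>R z"
          obtain c where c: "c \<in> C" "infdist a C = dist a c"
            using infdist_attains_inf[OF Cc] yC by blast
          have rat: "infdist a C / s\<^sup>2 < \<epsilon> / 2" using N by (simp add: s_def a_def infdist_nonneg)
          define v where "v = (2 / s\<^sup>2) *\<^sub>R (c - y - s *\<^sub>R A d)"
          have "v \<in> E" unfolding v_def using c CE yC AE Es
            by (intro subspace_scale subspace_diff) auto
          moreover have "dist v z < \<epsilon>"
          proof -
            have "v - z = (2 / s\<^sup>2) *\<^sub>R (c - a)" using s2 by (simp add: v_def a_def algebra_simps)
            then have "dist v z = (2 / s\<^sup>2) * infdist a C" using s2 c(2)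
              by (simp add: dist_norm norm_minus_commute)
            also have "\<dots> = 2 * (infdist a C / s\<^sup>2)" by simp
            also have "\<dots> < \<epsilon>" using rat by (simp add: mult.commute)
            finally show ?thesis .
          qed
          ultimately show "\<exists>v\<in>E. dist v z < \<epsilon>" by blast
        qed
        then show ?thesis using Ec by simp
      qed
      define Vh where "Vh = blinfun_apply (frechet_derivative (\<lambda>z. Blinfun (frechet_derivative h (at z))) (at xs) d) d"
      define Vt where "Vt = blinfun_apply (frechet_derivative (\<lambda>z. Blinfun (frechet_derivative \<theta> (at z))) (at xs) d) d"
      define Vz where "Vz = blinfun_apply (frechet_derivative (\<lambda>z. Blinfun (frechet_derivative \<zeta> (at z))) (at xs) d) d"
      define V where "V = (Vh, Vt, Vz)"
      have VE: "V \<in> E"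
      proof -
        have "Vt \<in> sym_mats" unfolding Vt_def
          by (rule second_in_closed_subspace[OF tdt closed_sym_mats subspace_sym_mats]) (use assms(5) in auto)
        moreover have "Vz \<in> sym_mats" unfolding Vz_def
          by (rule second_in_closed_subspace[OF tdz closed_sym_mats subspace_sym_mats]) (use assms(6) in auto)
        ultimately show ?thesis by (simp add: V_def E_def mult_space_def)
      qed
      obtain w l where wl: "z - V = A w + l" "l \<in> E" "\<forall>u\<in>N. l \<bullet> u = 0"
      proof -
        have "z - V \<in> E" by (rule subspace_diff[OF Es zE VE])
        from decomp[OF this] show ?thesis using that by blast
      qed
      define z' where "z' = z + (- l)"
      have z'T: "z' \<in> outer_so_tangent C y (A d)" unfolding z'_def
        by (rule so_shift[OF Cc CE Es yC _ _ zT]) (use wl Es in \<open>auto simp: N_def[symmetric] subspace_neg\<close>)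
      have z'eq: "z' = A w + V" using wl(1) by (simp add: z'_def algebra_simps)
      have muz': "\<mu>s \<bullet> z' = \<mu>s \<bullet> z"
        using perp_span[OF wl(3) muspan] by (simp add: z'_def inner_commute inner_diff_right)
      obtain t where t: "\<forall>k. 0 < t k" "t \<longlonglongrightarrow> 0"
        and limz: "(\<lambda>k. infdist (y + t k *\<^sub>R A d + ((t k)\<^sup>2 / 2) *\<^sub>R z') C / (t k)\<^sup>2) \<longlonglongrightarrow> 0"
        using z'T unfolding outer_so_tangent_def by blast
      define cM where "cM = 1 + 4 * cP + 3 * norm \<mu>s"
      have cM0: "cM > 0" using cP0 by (simp add: cM_def add_pos_nonneg)
      define \<epsilon> where "\<epsilon> = \<gamma> / (4 * cM)"
      have e0: "\<epsilon> > 0" using g0 cM0 by (simp add: \<epsilon>_def)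
      have ecM: "\<epsilon> * cM = \<gamma> / 4" using cM0 by (simp add: \<epsilon>_def)
      obtain \<delta>l where dl: "\<delta>l > 0" "\<forall>t. 0 < t \<and> t < \<delta>l \<longrightarrow>
        norm (LL (xs + t *\<^sub>R d + (t\<^sup>2/2) *\<^sub>R w) - LL xs - t *\<^sub>R frechet_derivative LL (at xs) d
          - (t\<^sup>2/2) *\<^sub>R (frechet_derivative LL (at xs) w
              + blinfun_apply (frechet_derivative (\<lambda>z. Blinfun (frechet_derivative LL (at z))) (at xs) d) d))
        \<le> \<epsilon> * t\<^sup>2"
        using taylor2[OF tdl e0, of xs d w] by blast
      obtain \<delta>h where dh: "\<delta>h > 0" "\<forall>t. 0 < t \<and> t < \<delta>h \<longrightarrow>
        norm (h (xs + t *\<^sub>R d + (t\<^sup>2/2) *\<^sub>R w) - h xs - t *\<^sub>R frechet_derivative h (at xs) d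
          - (t\<^sup>2/2) *\<^sub>R (frechet_derivative h (at xs) w + Vh)) \<le> \<epsilon> * t\<^sup>2"
        using taylor2[OF tdh e0, of xs d w] unfolding Vh_def by blast
      obtain \<delta>t where dt: "\<delta>t > 0" "\<forall>t. 0 < t \<and> t < \<delta>t \<longrightarrow>
        norm (\<theta> (xs + t *\<^sub>R d + (t\<^sup>2/2) *\<^sub>R w) - \<theta> xs - t *\<^sub>R frechet_derivative \<theta> (at xs) d
          - (t\<^sup>2/2) *\<^sub>R (frechet_derivative \<theta> (at xs) w + Vt)) \<le> \<epsilon> * t\<^sup>2"
        using taylor2[OF tdt e0, of xs d w] unfolding Vt_def by blast
      obtain \<delta>z where dz: "\<delta>z > 0" "\<forall>t. 0 < t \<and> t < \<delta>z \<longrightarrow>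
        norm (\<zeta> (xs + t *\<^sub>R d + (t\<^sup>2/2) *\<^sub>R w) - \<zeta> xs - t *\<^sub>R frechet_derivative \<zeta> (at xs) d
          - (t\<^sup>2/2) *\<^sub>R (frechet_derivative \<zeta> (at xs) w + Vz)) \<le> \<epsilon> * t\<^sup>2"
        using taylor2[OF tdz e0, of xs d w] unfolding Vz_def by blast
      define nn where "nn = norm d + norm w + 1"
      have nn0: "nn > 0" unfolding nn_def using norm_ge_zero[of d] norm_ge_zero[of w] by linarith
      define m where "m = min 1 (min \<delta>l (min \<delta>h (min \<delta>t (min \<delta>z (\<delta>P / nn)))))"
      have m0: "m > 0" using dl dh dt dz dP nn0 by (simp add: m_def)
      obtain N1 where N1: "\<forall>k\<ge>N1. dist (t k) 0 < m" using ev_seq[OF t(2) m0] by blast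
      obtain N2 where N2: "\<forall>k\<ge>N2. dist (infdist (y + t k *\<^sub>R A d + ((t k)\<^sup>2 / 2) *\<^sub>R z') C / (t k)\<^sup>2) 0 < \<epsilon>"
        using ev_seq[OF limz e0] by blast
      define s where "s = t (max N1 N2)"
      have s0: "s > 0" using t(1) by (simp add: s_def)
      have "dist s 0 < m" using N1 unfolding s_def by (meson max.cobounded1)
      then have sm: "s < m" using s0 by simp
      have sb: "s < 1" "s < \<delta>l" "s < \<delta>h" "s < \<delta>t" "s < \<delta>z" "s < \<delta>P / nn" using sm by (auto simp: m_def)
      have s2: "s\<^sup>2 > 0" using s0 by simp
      define x where "x = xs + s *\<^sub>R d + (s\<^sup>2/2) *\<^sub>R w"
      define a where "a = y + s *\<^sub>R A d + (s\<^sup>2 / 2) *\<^sub>R z'"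
      have ssq: "s\<^sup>2 / 2 \<le> s"
      proof -
        have "s * s \<le> s * 1" using s0 sb(1) by (intro mult_left_mono) auto
        then show ?thesis using s0 by (simp add: power2_eq_square)
      qed
      have dx: "dist x xs < \<delta>P"
      proof -
        have "dist x xs = norm (s *\<^sub>R d + (s\<^sup>2/2) *\<^sub>R w)" by (simp add: x_def dist_norm)
        also have "\<dots> \<le> s * norm d + (s\<^sup>2/2) * norm w"
          using norm_triangle_ineq[of "s *\<^sub>R d" "(s\<^sup>2/2) *\<^sub>R w"] s0 by simp
        also have "\<dots> \<le> s * norm d + s * norm w" using ssq by (intro add_left_mono mult_right_mono) auto
        also have "\<dots> \<le> s * nn" using s0 by (simp add: nn_def distrib_left)
        also have "\<dots> < \<delta>P" using sb(6) nn0 by (simp add: field_simps)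
        finally show ?thesis .
      qed
      have i1: "LL x \<le> LL xs + (s\<^sup>2/2) * Q + \<epsilon> * s\<^sup>2"
      proof -
        have "norm (LL x - LL xs - (s\<^sup>2/2) * Q) \<le> \<epsilon> * s\<^sup>2"
          using dl(2) s0 sb(2) unfolding l'0 Q_def hess_quad_def x_def by simp
        then show ?thesis by (simp add: abs_le_iff)
      qed
      have i2: "norm (U x - a) \<le> 3 * \<epsilon> * s\<^sup>2"
      proof -
        define Rh where "Rh = h x - h xs - s *\<^sub>R frechet_derivative h (at xs) d - (s\<^sup>2/2) *\<^sub>R (frechet_derivative h (at xs) w + Vh)"
        define Rt where "Rt = \<theta> x - \<theta> xs - s *\<^sub>R frechet_derivative \<theta> (at xs) d - (s\<^sup>2/2) *\<^sub>R (frechet_derivative \<theta> (at xs) w + Vt)"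
        define Rz where "Rz = \<zeta> x - \<zeta> xs - s *\<^sub>R frechet_derivative \<zeta> (at xs) d - (s\<^sup>2/2) *\<^sub>R (frechet_derivative \<zeta> (at xs) w + Vz)"
        have "U x - a = (Rh, Rt, Rz)"
          by (simp add: U_def Ups_def a_def y_def z'eq A_def DU_def V_def Rh_def Rt_def Rz_def algebra_simps)
        moreover have "norm (Rh, Rt, Rz) \<le> norm Rh + (norm Rt + norm Rz)"
          using norm_Pair_le[of Rh "(Rt, Rz)"] norm_Pair_le[of Rt Rz] by simp
        moreover have "norm Rh \<le> \<epsilon> * s\<^sup>2" using dh(2) s0 sb(3) by (simp add: Rh_def x_def)
        moreover have "norm Rt \<le> \<epsilon> * s\<^sup>2" using dt(2) s0 sb(4) by (simp add: Rt_def x_def)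
        moreover have "norm Rz \<le> \<epsilon> * s\<^sup>2" using dz(2) s0 sb(5) by (simp add: Rz_def x_def)
        ultimately show ?thesis by simp
      qed
      have i3: "infdist a C \<le> \<epsilon> * s\<^sup>2"
      proof -
        have "infdist a C / s\<^sup>2 < \<epsilon>" using N2 by (simp add: s_def a_def infdist_nonneg)
        then show ?thesis using s2 by (simp add: divide_less_eq less_imp_le)
      qed
      have i4: "infdist (U x) C \<le> 4 * \<epsilon> * s\<^sup>2"
      proof -
        have "infdist (U x) C \<le> infdist a C + dist (U x) a" by (rule infdist_triangle)
        then show ?thesis using i2 i3 by (simp add: dist_norm)
      qed
      have i5: "\<phi> xs \<le> \<phi> x + cP * (4 * \<epsilon> * s\<^sup>2)"
      proof -
        have "\<phi> xs \<le> \<phi> x + cP * infdist (U x) C" using dP(2) dx by blast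
        moreover have "cP * infdist (U x) C \<le> cP * (4 * \<epsilon> * s\<^sup>2)" using i4 cP0 by (intro mult_left_mono)
        ultimately show ?thesis by simp
      qed
      have i7: "\<mu>s \<bullet> U x \<ge> \<mu>s \<bullet> a - norm \<mu>s * (3 * \<epsilon> * s\<^sup>2)"
      proof -
        have "\<bar>\<mu>s \<bullet> (U x - a)\<bar> \<le> norm \<mu>s * norm (U x - a)" by (rule Cauchy_Schwarz_ineq2)
        also have "\<dots> \<le> norm \<mu>s * (3 * \<epsilon> * s\<^sup>2)" using i2 by (intro mult_left_mono) auto
        finally show ?thesis by (simp add: inner_diff_right abs_le_iff)
      qed
      have i8: "\<mu>s \<bullet> a = \<mu>s \<bullet> y + (s\<^sup>2/2) * (\<mu>s \<bullet> z)"
        using muAd muz' by (simp add: a_def inner_add_right)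
      have i9: "LL xs = \<phi> xs + \<mu>s \<bullet> y" by (simp add: lU y_def)
      have "\<phi> xs + \<mu>s \<bullet> y + (s\<^sup>2/2) * Q + \<epsilon> * s\<^sup>2 \<ge> \<phi> xs - cP * (4 * \<epsilon> * s\<^sup>2) + \<mu>s \<bullet> y + (s\<^sup>2/2) * (\<mu>s \<bullet> z) - norm \<mu>s * (3 * \<epsilon> * s\<^sup>2)"
        using i1 i5 i7 i8 i9 lU[of x] by linarith
      then have "(s\<^sup>2/2) * (\<mu>s \<bullet> z - Q) \<le> (\<epsilon> * cM) * s\<^sup>2"
        by (simp add: cM_def algebra_simps)
      then have "(s\<^sup>2/2) * \<gamma> \<le> (\<gamma> / 4) * s\<^sup>2" using ecM by (simp add: \<gamma>_def)
      then show False using g0 s2 by (simp add: field_simps)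
    qed
    have "support_fun \<mu>s (outer_so_tangent C y (A d)) \<le> ereal Q"
      unfolding support_fun_def by (rule SUP_least) (simp add: bound)
    then show "ereal (hess_quad (\<lambda>z. Lag \<phi> h \<theta> \<zeta> z \<mu>s) xs d) - support_fun \<mu>s (outer_so_tangent C y (A d)) \<ge> 0"
      unfolding Q_def LL_def
      by (cases "support_fun \<mu>s (outer_so_tangent C y (A d))") auto
  qed
  show ?thesis
    apply (rule exI[of _ \<mu>s])
    using set1 set2 set3 SO
    unfolding N_def E_def C_def y_def U_def \<phi>'_def A_def AU[symmetric]
    by simp
qed



end
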